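(* Let $N\ge2$ be an integer and let $g\in L^1([0,1])$ satisfy $\lim_{t\to\infty}e^{(N-3)t}\int_0^{e^{-t}}g(s)\,ds=0$. Fix one of the two boundary conditions at $t=0$: either (D) $z(0)=0$, or (Nav) $z'(0)-(N-2)z(0)=0$. Let $X$ be the Banach space of $z\in C^2([0,\infty))$ satisfying the chosen condition at $0$ and $e^tz^{(j)}(t)\to0$ as $t\to\infty$ for $j=0,1,2$, with norm $\|z\|_X=\sum_{j=0}^2\sup_{t\ge0}e^t|z^{(j)}(t)|$, and let $Y$ be the Banach space of $h\in C([0,\infty))$ with $e^th(t)\to0$ as $t\to\infty$, with norm $\sup_{t\ge0}e^t|h(t)|$. Define $\mathcal{F}:X\times\mathbb{R}\to Y$ by $$\mathcal{F}(z,\lambda)(t)=-z''(t)+(N-4)z'(t)+(2N-4)z(t)-\frac{N-1}{2}z(t)^2-\lambda e^{(N-4)t}\int_0^{e^{-t}}g(s)\,ds.$$ Then there exist a neighborhood $U\subset X$ of $0$ and an open neighborhood $I\subset\mathbb{R}$ of $0$ such that for every $\lambda\in I$ there is a unique $z(\lambda)\in U$ with $\mathcal{F}(z(\lambda),\lambda)=0$. Moreover, the map $I\ni\lambda\mapsto z(\lambda)\in X$ is of class $C^1$, $z(0)=0$, and the linear map $\mathcal{F}_z(z(\lambda),\lambda):X\to Y$ is bijective for every $\lambda\in I$. *)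

theory Defs
  imports "HOL-Analysis.Analysis"
begin

datatype bc = Dir | Nav

text \<open>Functions on [0,oo) are represented as real => real, normalised to be 0 on t < 0.
  One-sided derivatives on [0,oo).\<close>
definition d1 :: "(real \<Rightarrow> real) \<Rightarrow> real \<Rightarrow> real" where
  "d1 z t = vector_derivative z (at t within {0..})"

definition d2 :: "(real \<Rightarrow> real) \<Rightarrow> real \<Rightarrow> real" where
  "d2 z t = d1 (d1 z) t"

definition C2_half :: "(real \<Rightarrow> real) \<Rightarrow> bool" where
  "C2_half z \<longleftrightarrow>
     (\<forall>t\<ge>0. (z has_vector_derivative d1 z t) (at t within {0..})) \<and>
     (\<forall>t\<ge>0. (d1 z has_vector_derivative d2 z t) (at t within {0..})) \<and>
     continuous_on {0..} (d2 z)"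

definition bc_holds :: "nat \<Rightarrow> bc \<Rightarrow> (real \<Rightarrow> real) \<Rightarrow> bool" where
  "bc_holds N b z = (case b of Dir \<Rightarrow> z 0 = 0
                             | Nav \<Rightarrow> d1 z 0 - (real N - 2) * z 0 = 0)"

definition Xsp :: "nat \<Rightarrow> bc \<Rightarrow> (real \<Rightarrow> real) set" where
  "Xsp N b = {z. (\<forall>t<0. z t = 0) \<and> C2_half z \<and> bc_holds N b z \<and>
      ((\<lambda>t. exp t * z t) \<longlongrightarrow> 0) at_top \<and>
      ((\<lambda>t. exp t * d1 z t) \<longlongrightarrow> 0) at_top \<and>
      ((\<lambda>t. exp t * d2 z t) \<longlongrightarrow> 0) at_top}"

definition Xnorm :: "(real \<Rightarrow> real) \<Rightarrow> real" where
  "Xnorm z = (SUP t\<in>{0..}. exp t * \<bar>z t\<bar>) + (SUP t\<in>{0..}. exp t * \<bar>d1 z t\<bar>)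
             + (SUP t\<in>{0..}. exp t * \<bar>d2 z t\<bar>)"

definition Ysp :: "(real \<Rightarrow> real) set" where
  "Ysp = {h. (\<forall>t<0. h t = 0) \<and> continuous_on {0..} h \<and>
             ((\<lambda>t. exp t * h t) \<longlongrightarrow> 0) at_top}"

definition Ynorm :: "(real \<Rightarrow> real) \<Rightarrow> real" where
  "Ynorm h = (SUP t\<in>{0..}. exp t * \<bar>h t\<bar>)"

definition Fmap :: "nat \<Rightarrow> (real \<Rightarrow> real) \<Rightarrow> (real \<Rightarrow> real) \<Rightarrow> real \<Rightarrow> real \<Rightarrow> real" where
  "Fmap N g z lam t = (if t < 0 then 0 else
      - d2 z t + (real N - 4) * d1 z t + (2 * real N - 4) * z t
      - (real N - 1) / 2 * (z t)\<^sup>2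
      - lam * exp ((real N - 4) * t) * (LBINT s=0..exp (- t). g s))"

text \<open>L is the Frechet derivative of F(.,lambda) : X -> Y at z (partial derivative F_z).\<close>
definition is_Fz :: "nat \<Rightarrow> bc \<Rightarrow> (real \<Rightarrow> real) \<Rightarrow> (real \<Rightarrow> real) \<Rightarrow> real
                     \<Rightarrow> ((real \<Rightarrow> real) \<Rightarrow> (real \<Rightarrow> real)) \<Rightarrow> bool" where
  "is_Fz N b g z lam L \<longleftrightarrow>
     (\<forall>w\<in>Xsp N b. L w \<in> Ysp) \<and>
     (\<forall>v\<in>Xsp N b. \<forall>w\<in>Xsp N b. \<forall>a c::real.
         L (\<lambda>t. a * v t + c * w t) = (\<lambda>t. a * L v t + c * L w t)) \<and>
     (\<exists>C. \<forall>w\<in>Xsp N b. Ynorm (L w) \<le> C * Xnorm w) \<and>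
     (\<forall>e>0. \<exists>d>0. \<forall>w\<in>Xsp N b. Xnorm w < d \<longrightarrow>
         Ynorm (\<lambda>t. Fmap N g (\<lambda>s. z s + w s) lam t - Fmap N g z lam t - L w t)
           \<le> e * Xnorm w)"

definition C1_into_X :: "nat \<Rightarrow> bc \<Rightarrow> real set \<Rightarrow> (real \<Rightarrow> real \<Rightarrow> real) \<Rightarrow> bool" where
  "C1_into_X N b I zf \<longleftrightarrow>
     (\<exists>zf'. (\<forall>l\<in>I. zf l \<in> Xsp N b \<and> zf' l \<in> Xsp N b) \<and>
       (\<forall>l\<in>I. \<forall>e>0. \<exists>d>0. \<forall>m\<in>I. \<bar>m - l\<bar> < d \<longrightarrow>
          Xnorm (\<lambda>t. zf m t - zf l t - (m - l) * zf' l t) \<le> e * \<bar>m - l\<bar>) \<and>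
       (\<forall>l\<in>I. \<forall>e>0. \<exists>d>0. \<forall>m\<in>I. \<bar>m - l\<bar> < d \<longrightarrow>
          Xnorm (\<lambda>t. zf' m t - zf' l t) < e))"

end

theory Submission
  imports Defs
begin
lemma at_Ici_nbot: "(t::real) \<ge> 0 \<Longrightarrow> at t within {0..} \<noteq> bot"
proof -
  assume "t \<ge> 0"
  have "t islimpt {t<..<t+1}" by (rule islimpt_greaterThanLessThan1) simp
  hence "t islimpt {0..}" by (rule islimpt_subset) (use \<open>t\<ge>0\<close> in auto)
  thus ?thesis by (simp add: trivial_limit_within)
qed

definition hdv :: "(real \<Rightarrow> real) \<Rightarrow> (real \<Rightarrow> real) \<Rightarrow> bool" where
  "hdv f f' \<longleftrightarrow> (\<forall>t\<ge>0. (f has_real_derivative f' t) (at t within {0..}))"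

lemma d1_eq: "hdv f f' \<Longrightarrow> t \<ge> 0 \<Longrightarrow> d1 f t = f' t"
  unfolding d1_def hdv_def
  by (metis at_Ici_nbot has_real_derivative_iff_has_vector_derivative vector_derivative_within)

lemma hd_cong:
  assumes "hdv f f'" "\<And>t. t \<ge> 0 \<Longrightarrow> g t = f t" "\<And>t. t \<ge> 0 \<Longrightarrow> g' t = f' t"
  shows "hdv g g'"
  unfolding hdv_def
proof (intro allI impI)
  fix t :: real assume t: "t \<ge> 0"
  have "(f has_real_derivative f' t) (at t within {0..})" using assms(1) t by (simp add: hdv_def)
  hence "(g has_real_derivative f' t) (at t within {0..})"
    by (rule has_field_derivative_transform_within[where d=1]) (use t assms(2) in auto)
  thus "(g has_real_derivative g' t) (at t within {0..})" using assms(3) t by simp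
qed

lemma hd_d1: "hdv f f' \<Longrightarrow> hdv f (d1 f)"
  by (rule hd_cong[of f f']) (auto simp: d1_eq)

lemma hd_cont: "hdv f f' \<Longrightarrow> continuous_on {0..} f"
  unfolding hdv_def continuous_on_eq_continuous_within
  by (metis DERIV_continuous atLeast_iff)

definition wbd :: "(real \<Rightarrow> real) \<Rightarrow> real \<Rightarrow> bool" where
  "wbd z M \<longleftrightarrow> (\<forall>t\<ge>0. exp t * \<bar>z t\<bar> \<le> M)"

lemma Xsp_hd:
  assumes "z \<in> Xsp N b"
  shows "hdv z (d1 z)" "hdv (d1 z) (d2 z)"
  using assms unfolding Xsp_def C2_half_def hdv_def
  by (auto simp: has_real_derivative_iff_has_vector_derivative)

lemma Xsp_props:
  assumes "z \<in> Xsp N b"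
  shows "\<And>t. t < 0 \<Longrightarrow> z t = 0" "bc_holds N b z" "continuous_on {0..} (d2 z)"
    "((\<lambda>t. exp t * z t) \<longlongrightarrow> 0) at_top"
    "((\<lambda>t. exp t * d1 z t) \<longlongrightarrow> 0) at_top"
    "((\<lambda>t. exp t * d2 z t) \<longlongrightarrow> 0) at_top"
    "continuous_on {0..} z" "continuous_on {0..} (d1 z)"
  using assms Xsp_hd[OF assms] hd_cont unfolding Xsp_def C2_half_def by auto

lemma inX:
  assumes "\<And>t. t < 0 \<Longrightarrow> z t = 0" "hdv z z1" "hdv z1 z2" "continuous_on {0..} z2"
    "case b of Dir \<Rightarrow> z 0 = 0 | Nav \<Rightarrow> z1 0 - (real N - 2) * z 0 = 0"
    "((\<lambda>t. exp t * z t) \<longlongrightarrow> 0) at_top"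
    "((\<lambda>t. exp t * z1 t) \<longlongrightarrow> 0) at_top"
    "((\<lambda>t. exp t * z2 t) \<longlongrightarrow> 0) at_top"
  shows "z \<in> Xsp N b" "\<And>t. t \<ge> 0 \<Longrightarrow> d1 z t = z1 t" "\<And>t. t \<ge> 0 \<Longrightarrow> d2 z t = z2 t"
proof -
  have e1: "\<And>t. t \<ge> 0 \<Longrightarrow> d1 z t = z1 t" using d1_eq[OF assms(2)] .
  have h1: "hdv (d1 z) z2" by (rule hd_cong[OF assms(3)]) (auto simp: e1)
  have e2: "\<And>t. t \<ge> 0 \<Longrightarrow> d2 z t = z2 t" unfolding d2_def using d1_eq[OF h1] .
  show "\<And>t. t \<ge> 0 \<Longrightarrow> d1 z t = z1 t" by (rule e1)
  show "\<And>t. t \<ge> 0 \<Longrightarrow> d2 z t = z2 t" by (rule e2)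
  have h0: "hdv z (d1 z)" using hd_d1[OF assms(2)] .
  have h2: "hdv (d1 z) (d2 z)" using hd_cong[OF h1] e2 by auto
  have c2: "continuous_on {0..} (d2 z)"
    using assms(4) by (rule continuous_on_eq) (auto simp: e2)
  have l0: "((\<lambda>t. exp t * d1 z t) \<longlongrightarrow> 0) at_top"
    using assms(7) by (rule Lim_transform_eventually) (auto intro!: eventually_at_top_linorderI[of 0] simp: e1)
  have l2: "((\<lambda>t. exp t * d2 z t) \<longlongrightarrow> 0) at_top"
    using assms(8) by (rule Lim_transform_eventually) (auto intro!: eventually_at_top_linorderI[of 0] simp: e2)
  have bcz: "bc_holds N b z" using assms(5) e1[of 0] by (cases b) (auto simp: bc_holds_def)
  show "z \<in> Xsp N b"
    unfolding Xsp_def C2_half_def using h0 h2 c2 l0 l2 bcz assms(1,6)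
    by (auto simp: hdv_def has_real_derivative_iff_has_vector_derivative)
qed

lemma Xlin:
  assumes v: "v \<in> Xsp N b" and w: "w \<in> Xsp N b"
  shows "(\<lambda>t. a * v t + c * w t) \<in> Xsp N b"
    "\<And>t. t \<ge> 0 \<Longrightarrow> d1 (\<lambda>t. a * v t + c * w t) t = a * d1 v t + c * d1 w t"
    "\<And>t. t \<ge> 0 \<Longrightarrow> d2 (\<lambda>t. a * v t + c * w t) t = a * d2 v t + c * d2 w t"
proof -
  note hv = Xsp_hd[OF v] and hw = Xsp_hd[OF w] and pv = Xsp_props[OF v] and pw = Xsp_props[OF w]
  have H1: "hdv (\<lambda>t. a * v t + c * w t) (\<lambda>t. a * d1 v t + c * d1 w t)"
    using hv(1) hw(1) unfolding hdv_def by (auto intro!: derivative_eq_intros)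
  have H2: "hdv (\<lambda>t. a * d1 v t + c * d1 w t) (\<lambda>t. a * d2 v t + c * d2 w t)"
    using hv(2) hw(2) unfolding hdv_def by (auto intro!: derivative_eq_intros)
  have C: "continuous_on {0..} (\<lambda>t. a * d2 v t + c * d2 w t)"
    using pv(3) pw(3) by (auto intro!: continuous_intros)
  have lim: "((\<lambda>t. exp t * (a * f t + c * k t)) \<longlongrightarrow> 0) at_top"
    if "((\<lambda>t. exp t * f t) \<longlongrightarrow> 0) at_top" "((\<lambda>t. exp t * k t) \<longlongrightarrow> 0) at_top" for f k :: "real \<Rightarrow> real"
  proof -
    have "((\<lambda>t. a * (exp t * f t) + c * (exp t * k t)) \<longlongrightarrow> a * 0 + c * 0) at_top"
      by (intro tendsto_intros that)
    thus ?thesis by (simp add: algebra_simps)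
  qed
  have B: "case b of Dir \<Rightarrow> a * v 0 + c * w 0 = 0
      | Nav \<Rightarrow> (a * d1 v 0 + c * d1 w 0) - (real N - 2) * (a * v 0 + c * w 0) = 0"
  proof (cases b)
    case Dir thus ?thesis using pv(2) pw(2) by (simp add: bc_holds_def)
  next
    case Nav
    have "d1 v 0 - (real N - 2) * v 0 = 0" "d1 w 0 - (real N - 2) * w 0 = 0"
      using pv(2) pw(2) Nav by (auto simp: bc_holds_def)
    moreover have "(a * d1 v 0 + c * d1 w 0) - (real N - 2) * (a * v 0 + c * w 0)
       = a * (d1 v 0 - (real N - 2) * v 0) + c * (d1 w 0 - (real N - 2) * w 0)"
      by (simp add: algebra_simps)
    ultimately show ?thesis using Nav by simp
  qed
  note R = inX[OF _ H1 H2 C B] lim[OF pv(4) pw(4)] lim[OF pv(5) pw(5)] lim[OF pv(6) pw(6)]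
  show "(\<lambda>t. a * v t + c * w t) \<in> Xsp N b"
    "\<And>t. t \<ge> 0 \<Longrightarrow> d1 (\<lambda>t. a * v t + c * w t) t = a * d1 v t + c * d1 w t"
    "\<And>t. t \<ge> 0 \<Longrightarrow> d2 (\<lambda>t. a * v t + c * w t) t = a * d2 v t + c * d2 w t"
    using R pv(1) pw(1) by auto
qed

lemma within_conv: "0 \<le> t \<Longrightarrow> t < b \<Longrightarrow> at t within {0..b} = at (t::real) within {0..}"
  by (rule at_within_nhd[where S="{..<b}"]) auto

lemma IntD:
  assumes "continuous_on {0..} G"
  shows "hdv (\<lambda>x. integral {0..x} G) G"
  unfolding hdv_def
proof (intro allI impI)
  fix t :: real assume t: "t \<ge> 0"
  have "continuous_on {0..t+1} G" using assms by (rule continuous_on_subset) auto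
  hence "((\<lambda>x. integral {0..x} G) has_real_derivative G t) (at t within {0..t+1})"
    by (rule integral_has_real_derivative) (use t in auto)
  thus "((\<lambda>x. integral {0..x} G) has_real_derivative G t) (at t within {0..})"
    using within_conv[OF t, of "t+1"] by simp
qed

lemma expint: "(T::real) \<le> t \<Longrightarrow> ((\<lambda>s. exp s) has_integral (exp t - exp T)) {T..t}"
  using fundamental_theorem_of_calculus[of T t exp exp]
  by (auto simp: has_real_derivative_iff_has_vector_derivative[symmetric]
        intro: DERIV_exp[THEN has_field_derivative_at_within])

lemma IB:
  fixes v :: "real \<Rightarrow> real" and T t e :: real
  assumes "T \<le> t" "continuous_on {T..t} v" "\<And>s. s \<in> {T..t} \<Longrightarrow> \<bar>v s\<bar> \<le> e * exp (- s)"
  shows "\<bar>integral {T..t} (\<lambda>s. exp (2 * s) * v s)\<bar> \<le> e * (exp t - exp T)"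
proof -
  have i1: "(\<lambda>s. exp (2 * s) * v s) integrable_on {T..t}"
    by (rule integrable_continuous_interval) (use assms(2) in \<open>auto intro!: continuous_intros\<close>)
  have h2: "((\<lambda>s. e * exp s) has_integral (e * (exp t - exp T))) {T..t}"
    using has_integral_mult_right[OF expint[OF assms(1)]] by simp
  have bd: "norm (exp (2 * s) * v s) \<le> e * exp s" if s: "s \<in> {T..t}" for s
  proof -
    have "\<bar>exp (2 * s) * v s\<bar> = exp (2 * s) * \<bar>v s\<bar>" by (simp add: abs_mult)
    also have "\<dots> \<le> exp (2 * s) * (e * exp (-s))" using assms(3)[OF s] by (simp add: mult_left_mono)
    also have "\<dots> = e * exp s"
      by (simp add: exp_minus field_simps flip: exp_add)
    finally show ?thesis by simp
  qed
  have "\<bar>integral {T..t} (\<lambda>s. exp (2 * s) * v s)\<bar> \<le> integral {T..t} (\<lambda>s. e * exp s)"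
    using integral_norm_bound_integral[OF i1 _ bd] h2 by auto
  also have "\<dots> = e * (exp t - exp T)" using h2 by (rule integral_unique)
  finally show ?thesis .
qed

lemma tend0I:
  fixes f :: "real \<Rightarrow> real"
  assumes "\<And>e. e > 0 \<Longrightarrow> \<exists>T. \<forall>t\<ge>T. \<bar>f t\<bar> \<le> e"
  shows "(f \<longlongrightarrow> (0::real)) at_top"
proof (rule tendstoI)
  fix e :: real assume "e > 0"
  then obtain T where "\<forall>t\<ge>T. \<bar>f t\<bar> \<le> e/2" using assms[of "e/2"] by auto
  thus "eventually (\<lambda>t. dist (f t) 0 < e) at_top"
    using \<open>e>0\<close> by (auto intro!: eventually_at_top_linorderI[of T])
qed

lemma tend0D:
  fixes h :: "real \<Rightarrow> real"
  assumes "((\<lambda>t. exp t * h t) \<longlongrightarrow> (0::real)) at_top" "e > 0"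
  shows "\<exists>T\<ge>0. \<forall>s\<ge>T. \<bar>h s\<bar> \<le> e * exp (- s)"
proof -
  have "eventually (\<lambda>t. dist (exp t * h t) 0 < e) at_top" using assms tendstoD by blast
  then obtain T where T: "\<And>s. s \<ge> T \<Longrightarrow> \<bar>exp s * h s\<bar> < e" by (auto simp: eventually_at_top_linorder)
  show ?thesis
  proof (intro exI[of _ "max T 0"] conjI allI impI)
    fix s assume "s \<ge> max T 0"
    hence "exp s * \<bar>h s\<bar> < e" using T[of s] by (simp add: abs_mult)
    hence "\<bar>h s\<bar> < e / exp s" by (simp add: field_simps)
    thus "\<bar>h s\<bar> \<le> e * exp (- s)" by (simp add: exp_minus field_simps)
  qed simp
qed

lemma bnd_cont:
  fixes f :: "real \<Rightarrow> real"
  assumes "continuous_on {0..} f" "(f \<longlongrightarrow> (0::real)) at_top"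
  shows "\<exists>M. \<forall>t\<ge>0. \<bar>f t\<bar> \<le> M"
proof -
  have "eventually (\<lambda>t. dist (f t) 0 < 1) at_top" using assms(2) tendstoD by force
  then obtain T where T: "\<And>s. s \<ge> T \<Longrightarrow> \<bar>f s\<bar> < 1" by (auto simp: eventually_at_top_linorder)
  have "compact (f ` {0..max T 0})"
    by (rule compact_continuous_image) (use assms(1) in \<open>auto intro: continuous_on_subset\<close>)
  then obtain B where B: "\<And>x. x \<in> f ` {0..max T 0} \<Longrightarrow> norm x \<le> B"
    using compact_imp_bounded bounded_iff by metis
  show ?thesis
  proof (intro exI[of _ "max B 1"] allI impI)
    fix t :: real assume "t \<ge> 0"
    show "\<bar>f t\<bar> \<le> max B 1"
    proof (cases "t \<le> max T 0")
      case True thus ?thesis using B[of "f t"] \<open>t\<ge>0\<close> by force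
    next
      case False thus ?thesis using T[of t] by force
    qed
  qed
qed

lemma wbd_exists:
  assumes "continuous_on {0..} h" "((\<lambda>t. exp t * h t) \<longlongrightarrow> 0) at_top"
  shows "\<exists>M. wbd h M"
proof -
  have "continuous_on {0..} (\<lambda>t. exp t * h t)" using assms(1) by (auto intro!: continuous_intros)
  from bnd_cont[OF this assms(2)] obtain M where "\<forall>t\<ge>0. \<bar>exp t * h t\<bar> \<le> M" by auto
  thus ?thesis by (auto simp: wbd_def abs_mult)
qed

lemma wbd_nonneg: "wbd h M \<Longrightarrow> M \<ge> 0"
  unfolding wbd_def by (metis abs_ge_zero exp_ge_zero order.trans order_refl zero_le_mult_iff)

lemma wbd_abs: "wbd h M \<Longrightarrow> t \<ge> 0 \<Longrightarrow> \<bar>h t\<bar> \<le> M * exp (- t)"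
  unfolding wbd_def by (auto simp: exp_minus field_simps)

lemma wbdI: "(\<And>t. t \<ge> 0 \<Longrightarrow> \<bar>h t\<bar> \<le> M * exp (- t)) \<Longrightarrow> wbd h M"
  unfolding wbd_def by (auto simp: exp_minus field_simps)

definition Pop :: "real \<Rightarrow> (real \<Rightarrow> real) \<Rightarrow> real \<Rightarrow> real" where
  "Pop c h t = exp (c * t) * integral {t..} (\<lambda>s. exp (- (c * s)) * h s)"

lemma Ici_lebesgue: "{t::real..} \<in> sets lebesgue"
  by simp

lemma P_int:
  fixes h :: "real \<Rightarrow> real"
  assumes c: "c \<ge> 0" and hc: "continuous_on {0..} h" and hb: "wbd h M" and t: "t \<ge> 0"
  shows "(\<lambda>s. exp (- (c * s)) * h s) integrable_on {t..}"
proof (rule measurable_bounded_by_integrable_imp_integrable_real[where g="\<lambda>s. M * exp (- (c+1) * s)"])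
  have "continuous_on {t..} (\<lambda>s. exp (- (c * s)) * h s)"
    using hc t by (auto intro!: continuous_intros intro: continuous_on_subset)
  thus "(\<lambda>s. exp (- (c * s)) * h s) \<in> borel_measurable (lebesgue_on {t..})"
    by (rule continuous_imp_measurable_on_sets_lebesgue) simp
  show "(\<lambda>s. M * exp (- (c+1) * s)) integrable_on {t..}"
  proof -
    have "(\<lambda>x. exp (- (c + 1) * x)) integrable_on {t..}"
      using integrable_on_exp_minus_to_infinity[of "c+1" t] c by simp
    from integrable_on_mult_left[OF this, of M] show ?thesis by (simp add: mult.commute)
  qed
  show "{t..} \<in> sets lebesgue" by simp
  fix s assume s: "s \<in> {t..}"
  have "\<bar>exp (- (c * s)) * h s\<bar> = exp (- (c * s)) * \<bar>h s\<bar>" by (simp add: abs_mult)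
  also have "\<dots> \<le> exp (- (c * s)) * (M * exp (-s))"
    using wbd_abs[OF hb, of s] s t by (intro mult_left_mono) auto
  also have "\<dots> = M * exp (- (c+1) * s)" by (simp add: algebra_simps flip: exp_add)
  finally show "\<bar>exp (- (c * s)) * h s\<bar> \<le> M * exp (- (c+1) * s)" .
qed

lemma P_split:
  fixes h :: "real \<Rightarrow> real"
  assumes c: "c \<ge> 0" and hc: "continuous_on {0..} h" and hb: "wbd h M" and t: "t \<ge> 0"
  shows "integral {t..} (\<lambda>s. exp (- (c * s)) * h s)
       = integral {0..} (\<lambda>s. exp (- (c * s)) * h s) - integral {0..t} (\<lambda>s. exp (- (c * s)) * h s)"
proof -
  let ?F = "\<lambda>s. exp (- (c * s)) * h s"
  have i0: "?F integrable_on {0..}" using P_int[OF c hc hb, of 0] by simp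
  have i1: "?F integrable_on {0..t}" by (rule integrable_on_subinterval[OF i0]) auto
  have i2: "?F integrable_on {t..}" using P_int[OF c hc hb t] .
  have "(?F has_integral (integral {0..t} ?F + integral {t..} ?F)) ({0..t} \<union> {t..})"
  proof (rule has_integral_Un)
    show "negligible ({0..t} \<inter> {t..})" using t by (simp add: Int_atLeastAtMost)
  qed (use i1 i2 in \<open>auto simp: integrable_integral\<close>)
  moreover have "{0..t} \<union> {t..} = {0..}" using t by auto
  ultimately have "integral {0..} ?F = integral {0..t} ?F + integral {t..} ?F"
    by (simp add: integral_unique)
  thus ?thesis by simp
qed

lemma P_deriv:
  fixes h :: "real \<Rightarrow> real"
  assumes c: "c \<ge> 0" and hc: "continuous_on {0..} h" and hb: "wbd h M"
  shows "hdv (Pop c h) (\<lambda>t. c * Pop c h t - h t)"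
proof -
  let ?F = "\<lambda>s. exp (- (c * s)) * h s"
  define I0 where "I0 = integral {0..} ?F"
  have cF: "continuous_on {0..} ?F" using hc by (auto intro!: continuous_intros)
  have D: "hdv (\<lambda>x. integral {0..x} ?F) ?F" by (rule IntD[OF cF])
  have H: "hdv (\<lambda>t. exp (c * t) * (I0 - integral {0..t} ?F))
     (\<lambda>t. c * exp (c * t) * (I0 - integral {0..t} ?F) - exp (c * t) * ?F t)"
    unfolding hdv_def
  proof (intro allI impI)
    fix t :: real assume t: "t \<ge> 0"
    have d: "((\<lambda>x. integral {0..x} ?F) has_real_derivative ?F t) (at t within {0..})"
      using D t by (simp add: hdv_def)
    show "((\<lambda>t. exp (c * t) * (I0 - integral {0..t} ?F)) has_real_derivative
      c * exp (c * t) * (I0 - integral {0..t} ?F) - exp (c * t) * ?F t) (at t within {0..})"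
      by (rule derivative_eq_intros d refl | simp)+
  qed
  show ?thesis
  proof (rule hd_cong[OF H])
    fix t :: real assume t: "t \<ge> 0"
    show "Pop c h t = exp (c * t) * (I0 - integral {0..t} ?F)"
      unfolding Pop_def I0_def using P_split[OF c hc hb t] by simp
    have "exp (c * t) * ?F t = h t" by (simp add: exp_minus field_simps)
    thus "c * Pop c h t - h t = c * exp (c * t) * (I0 - integral {0..t} ?F) - exp (c * t) * ?F t"
      unfolding Pop_def I0_def using P_split[OF c hc hb t] by simp
  qed
qed

lemma P_bound:
  fixes h :: "real \<Rightarrow> real"
  assumes c: "c \<ge> 0" and hc: "continuous_on {0..} h" and hb: "wbd h M"
    and t0: "t0 \<ge> 0" and he: "\<And>s. s \<ge> t0 \<Longrightarrow> \<bar>h s\<bar> \<le> e * exp (- s)" and t: "t \<ge> t0"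
  shows "\<bar>Pop c h t\<bar> \<le> e * exp (- t)"
proof -
  let ?F = "\<lambda>s. exp (- (c * s)) * h s"
  have e0: "e \<ge> 0" using he[of t0] by (metis abs_ge_zero exp_gt_zero order.trans order_refl zero_le_mult_iff not_le)
  have g: "((\<lambda>s. e * exp (- (c+1) * s)) has_integral (e * (exp (- (c+1) * t) / (c+1)))) {t..}"
    using has_integral_mult_right[OF has_integral_exp_minus_to_infinity[of "c+1" t]] c by simp
  have bd: "norm (?F s) \<le> e * exp (- (c+1) * s)" if s: "s \<in> {t..}" for s
  proof -
    have "\<bar>?F s\<bar> = exp (- (c * s)) * \<bar>h s\<bar>" by (simp add: abs_mult)
    also have "\<dots> \<le> exp (- (c * s)) * (e * exp (-s))"
      using he[of s] s t by (intro mult_left_mono) auto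
    also have "\<dots> = e * exp (- (c+1) * s)" by (simp add: algebra_simps flip: exp_add)
    finally show ?thesis by simp
  qed
  have "\<bar>integral {t..} ?F\<bar> \<le> integral {t..} (\<lambda>s. e * exp (- (c+1) * s))"
    using integral_norm_bound_integral[OF P_int[OF c hc hb] _ bd] g t t0 by auto
  also have "\<dots> = e * (exp (- (c+1) * t) / (c+1))" using g by (rule integral_unique)
  finally have I: "\<bar>integral {t..} ?F\<bar> \<le> e * (exp (- (c+1) * t) / (c+1))" .
  have "\<bar>Pop c h t\<bar> = exp (c * t) * \<bar>integral {t..} ?F\<bar>" unfolding Pop_def by (simp add: abs_mult)
  also have "\<dots> \<le> exp (c * t) * (e * (exp (- (c+1) * t) / (c+1)))" using I by (rule mult_left_mono) simp
  also have "\<dots> = e * exp (-t) / (c+1)" by (simp add: algebra_simps flip: exp_add)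
  also have "\<dots> \<le> e * exp (-t)" using c e0 by (simp add: divide_le_eq mult_le_cancel_left1 algebra_simps)
  finally show ?thesis .
qed

definition Lop :: "nat \<Rightarrow> (real \<Rightarrow> real) \<Rightarrow> real \<Rightarrow> real" where
  "Lop N z t = (if t < 0 then 0 else - d2 z t + (real N - 4) * d1 z t + (2 * real N - 4) * z t)"

definition w0 :: "nat \<Rightarrow> bc \<Rightarrow> (real \<Rightarrow> real) \<Rightarrow> real" where
  "w0 N b h = (case b of Dir \<Rightarrow> 0 | Nav \<Rightarrow> Pop (real N - 2) h 0 / real N)"

definition Sop :: "nat \<Rightarrow> bc \<Rightarrow> (real \<Rightarrow> real) \<Rightarrow> real \<Rightarrow> real" where
  "Sop N b h t = (if t < 0 then 0 else
     exp (- (2 * t)) * (w0 N b h + integral {0..t} (\<lambda>s. exp (2 * s) * Pop (real N - 2) h s)))"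

lemma expK:
  assumes "K \<ge> 0" "e > (0::real)"
  shows "\<exists>T. \<forall>t\<ge>T. K * exp (- t) \<le> e"
proof (intro exI[of _ "K / e"] allI impI)
  fix t assume t: "t \<ge> K / e"
  have "K \<le> e * t" using t assms by (simp add: field_simps)
  also have "\<dots> \<le> e * exp t"
  proof -
    have "t \<le> exp t" using exp_ge_add_one_self[of t] by linarith
    thus ?thesis using assms by (intro mult_left_mono) auto
  qed
  finally show "K * exp (- t) \<le> e" by (simp add: exp_minus field_simps)
qed

lemma Ysp_props:
  assumes "h \<in> Ysp"
  shows "\<And>t. t < 0 \<Longrightarrow> h t = 0" "continuous_on {0..} h" "((\<lambda>t. exp t * h t) \<longlongrightarrow> 0) at_top"
  using assms unfolding Ysp_def by auto

lemma S_main: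
  fixes h :: "real \<Rightarrow> real"
  assumes N: "N \<ge> 2" and hY: "h \<in> Ysp" and hb: "wbd h M"
  shows "Sop N b h \<in> Xsp N b" "Lop N (Sop N b h) = h" "wbd (Sop N b h) M"
    "wbd (d1 (Sop N b h)) (3 * M)" "wbd (d2 (Sop N b h)) ((\<bar>real N - 4\<bar> + 5) * M)"
proof -
  define a where "a = real N - 2"
  have a0: "a \<ge> 0" using N by (simp add: a_def)
  have M0: "M \<ge> 0" using wbd_nonneg[OF hb] .
  note hp = Ysp_props[OF hY]
  define v where "v = Pop a h"
  have hv: "hdv v (\<lambda>t. a * v t - h t)" unfolding v_def by (rule P_deriv[OF a0 hp(2) hb])
  have cv: "continuous_on {0..} v" using hd_cont[OF hv] .
  have vb: "\<And>t. t \<ge> 0 \<Longrightarrow> \<bar>v t\<bar> \<le> M * exp (- t)"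
    unfolding v_def by (rule P_bound[OF a0 hp(2) hb order_refl]) (auto intro: wbd_abs[OF hb])
  have vlim: "((\<lambda>t. exp t * v t) \<longlongrightarrow> 0) at_top"
  proof (rule tend0I)
    fix e :: real assume e: "e > 0"
    obtain T where T: "T \<ge> 0" "\<And>s. s \<ge> T \<Longrightarrow> \<bar>h s\<bar> \<le> e * exp (- s)" using tend0D[OF hp(3) e] by auto
    show "\<exists>T. \<forall>t\<ge>T. \<bar>exp t * v t\<bar> \<le> e"
    proof (intro exI[of _ T] allI impI)
      fix t assume t: "t \<ge> T"
      have "\<bar>v t\<bar> \<le> e * exp (- t)" unfolding v_def by (rule P_bound[OF a0 hp(2) hb T t])
      thus "\<bar>exp t * v t\<bar> \<le> e" by (simp add: abs_mult exp_minus field_simps)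
    qed
  qed
  define ww where "ww = w0 N b h"
  have ww: "\<bar>ww\<bar> \<le> M"
  proof (cases b)
    case Dir thus ?thesis using M0 by (simp add: ww_def w0_def)
  next
    case Nav
    have "\<bar>v 0\<bar> \<le> M" using vb[of 0] by simp
    moreover have "\<bar>v 0 / real N\<bar> \<le> \<bar>v 0\<bar>"
    proof -
      have "\<bar>v 0\<bar> / real N \<le> \<bar>v 0\<bar> / 1" by (rule divide_left_mono) (use N in auto)
      thus ?thesis by simp
    qed
    ultimately show ?thesis using Nav by (simp add: ww_def w0_def v_def a_def)
  qed
  define Iv where "Iv t = integral {0..t} (\<lambda>s. exp (2 * s) * v s)" for t
  define W where "W t = exp (- (2 * t)) * (ww + Iv t)" for t
  have cG: "continuous_on {0..} (\<lambda>s. exp (2 * s) * v s)" using cv by (auto intro!: continuous_intros)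
  have hI: "hdv Iv (\<lambda>s. exp (2 * s) * v s)" unfolding Iv_def by (rule IntD[OF cG])
  have hW: "hdv W (\<lambda>t. -2 * W t + v t)"
    unfolding hdv_def
  proof (intro allI impI)
    fix t :: real assume t: "t \<ge> 0"
    have d: "(Iv has_real_derivative exp (2 * t) * v t) (at t within {0..})" using hI t by (simp add: hdv_def)
    show "(W has_real_derivative -2 * W t + v t) (at t within {0..})"
    proof -
      have e: "((\<lambda>t. exp (- (2 * t))) has_real_derivative exp (- (2 * t)) * (- 2)) (at t within {0..})"
        by (auto intro!: derivative_eq_intros)
      have s: "((\<lambda>t. ww + Iv t) has_real_derivative exp (2 * t) * v t) (at t within {0..})"
        using DERIV_add[OF DERIV_const d] by simp
      have "(W has_real_derivative (exp (- (2 * t)) * (- 2)) * (ww + Iv t) + (exp (2 * t) * v t) * exp (- (2 * t)))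
          (at t within {0..})"
        unfolding W_def[abs_def] by (rule DERIV_mult[OF e s])
      moreover have "(exp (- (2 * t)) * (- 2)) * (ww + Iv t) + (exp (2 * t) * v t) * exp (- (2 * t)) = -2 * W t + v t"
        by (simp add: W_def algebra_simps flip: exp_add)
      ultimately show ?thesis by simp
    qed
  qed
  have Wb: "\<bar>W t\<bar> \<le> M * exp (- t)" if t: "t \<ge> 0" for t
  proof -
    have "continuous_on {0..t} v" using cv by (rule continuous_on_subset) auto
    hence "\<bar>Iv t\<bar> \<le> M * (exp t - 1)" unfolding Iv_def using IB[of 0 t v M] t vb by auto
    hence "\<bar>ww + Iv t\<bar> \<le> M * exp t" using ww by (simp add: algebra_simps)
    hence "exp (- (2 * t)) * \<bar>ww + Iv t\<bar> \<le> exp (- (2 * t)) * (M * exp t)" by (simp add: mult_left_mono)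
    also have "\<dots> = M * exp (- t)" by (simp add: algebra_simps flip: exp_add)
    finally show ?thesis by (simp add: W_def abs_mult)
  qed
  have cW: "continuous_on {0..} W" using hd_cont[OF hW] .
  have Wlim: "((\<lambda>t. exp t * W t) \<longlongrightarrow> 0) at_top"
  proof (rule tend0I)
    fix e :: real assume e: "e > 0"
    obtain T where T: "T \<ge> 0" "\<And>s. s \<ge> T \<Longrightarrow> \<bar>v s\<bar> \<le> (e/2) * exp (- s)"
      using tend0D[OF vlim, of "e/2"] e by auto
    obtain T' where T': "\<And>t. t \<ge> T' \<Longrightarrow> (M + M * exp T) * exp (- t) \<le> e/2"
      using expK[of "M + M * exp T" "e/2"] M0 e by auto
    show "\<exists>T. \<forall>t\<ge>T. \<bar>exp t * W t\<bar> \<le> e"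
    proof (intro exI[of _ "max T T'"] allI impI)
      fix t assume t: "t \<ge> max T T'"
      have int: "(\<lambda>s. exp (2 * s) * v s) integrable_on {0..t}"
        by (rule integrable_continuous_interval) (use cG t T in \<open>auto intro: continuous_on_subset\<close>)
      have split: "Iv t = integral {0..T} (\<lambda>s. exp (2 * s) * v s) + integral {T..t} (\<lambda>s. exp (2 * s) * v s)"
        unfolding Iv_def using Henstock_Kurzweil_Integration.integral_combine[OF _ _ int, of T] T t by simp
      have c1: "continuous_on {0..T} v" using cv by (rule continuous_on_subset) auto
      have c2: "continuous_on {T..t} v" using cv by (rule continuous_on_subset) (use T in auto)
      have b1: "\<bar>integral {0..T} (\<lambda>s. exp (2 * s) * v s)\<bar> \<le> M * (exp T - exp 0)"
        using IB[of 0 T v M] c1 vb T by auto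
      have b2: "\<bar>integral {T..t} (\<lambda>s. exp (2 * s) * v s)\<bar> \<le> (e/2) * (exp t - exp T)"
        using IB[of T t v "e/2"] c2 T t by auto
      have tri: "\<bar>ww + Iv t\<bar> \<le> \<bar>ww\<bar> + \<bar>integral {0..T} (\<lambda>s. exp (2 * s) * v s)\<bar> + \<bar>integral {T..t} (\<lambda>s. exp (2 * s) * v s)\<bar>"
        unfolding split using abs_triangle_ineq[of ww "integral {0..T} (\<lambda>s. exp (2 * s) * v s) + integral {T..t} (\<lambda>s. exp (2 * s) * v s)"]
          abs_triangle_ineq[of "integral {0..T} (\<lambda>s. exp (2 * s) * v s)" "integral {T..t} (\<lambda>s. exp (2 * s) * v s)"]
        by linarith
      have m1: "M * (exp T - exp 0) \<le> M * exp T" using M0 by (simp add: algebra_simps)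
      have m2: "(e/2) * (exp t - exp T) \<le> (e/2) * exp t" using e by (simp add: algebra_simps)
      have "\<bar>ww + Iv t\<bar> \<le> M + M * exp T + (e/2) * exp t"
        using tri b1 b2 m1 m2 ww by linarith
      hence "exp (- t) * \<bar>ww + Iv t\<bar> \<le> exp (- t) * (M + M * exp T + (e/2) * exp t)"
        by (simp add: mult_left_mono)
      also have "\<dots> = (M + M * exp T) * exp (- t) + e/2"
        by (simp add: algebra_simps flip: exp_add)
      also have "\<dots> \<le> e" using T'[of t] t by simp
      finally have "exp (- t) * \<bar>ww + Iv t\<bar> \<le> e" .
      moreover have "\<bar>exp t * W t\<bar> = exp (- t) * \<bar>ww + Iv t\<bar>"
        by (simp add: W_def abs_mult flip: mult.assoc exp_add)
      ultimately show "\<bar>exp t * W t\<bar> \<le> e" by simp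
    qed
  qed
  have SW: "\<And>t. t \<ge> 0 \<Longrightarrow> Sop N b h t = W t"
    by (simp add: Sop_def W_def Iv_def ww_def v_def a_def)
  define z1 where "z1 t = -2 * W t + v t" for t
  define z2 where "z2 t = 4 * W t + (a - 2) * v t - h t" for t
  have h0: "hdv (Sop N b h) z1" by (rule hd_cong[OF hW]) (auto simp: SW z1_def)
  have h1: "hdv z1 z2"
    unfolding hdv_def
  proof (intro allI impI)
    fix t :: real assume t: "t \<ge> 0"
    have dW: "(W has_real_derivative -2 * W t + v t) (at t within {0..})" using hW t by (simp add: hdv_def)
    have dv: "(v has_real_derivative a * v t - h t) (at t within {0..})" using hv t by (simp add: hdv_def)
    have "(z1 has_real_derivative -2 * (-2 * W t + v t) + (a * v t - h t)) (at t within {0..})"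
      unfolding z1_def[abs_def] by (intro DERIV_add DERIV_cmult dW dv)
    moreover have "-2 * (-2 * W t + v t) + (a * v t - h t) = z2 t" by (simp add: z2_def algebra_simps)
    ultimately show "(z1 has_real_derivative z2 t) (at t within {0..})" by simp
  qed
  have c2: "continuous_on {0..} z2" unfolding z2_def using cW cv hp(2) by (auto intro!: continuous_intros)
  have Iv0: "Iv 0 = 0" by (simp add: Iv_def)
  have S00: "Sop N b h 0 = ww" using SW[of 0] by (simp add: W_def Iv0)
  have bcS: "case b of Dir \<Rightarrow> Sop N b h 0 = 0 | Nav \<Rightarrow> z1 0 - (real N - 2) * Sop N b h 0 = 0"
  proof (cases b)
    case Dir thus ?thesis using S00 by (simp add: ww_def w0_def)
  next
    case Nav
    have N0: "real N \<noteq> 0" using N by simp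
    have "z1 0 = -2 * ww + v 0" by (simp add: z1_def W_def Iv0)
    moreover have "ww = v 0 / real N" using Nav by (simp add: ww_def w0_def v_def a_def)
    ultimately have "z1 0 - (real N - 2) * ww = v 0 - real N * (v 0 / real N)" by (simp add: algebra_simps)
    also have "\<dots> = 0" using N0 by simp
    finally show ?thesis using Nav S00 by simp
  qed
  have lS: "((\<lambda>t. exp t * Sop N b h t) \<longlongrightarrow> 0) at_top"
    using Wlim by (rule Lim_transform_eventually) (auto intro!: eventually_at_top_linorderI[of 0] simp: SW)
  have lim2: "((\<lambda>t. exp t * (p * W t + q * v t + r * h t)) \<longlongrightarrow> 0) at_top" for p q r
  proof -
    have "((\<lambda>t. p * (exp t * W t) + q * (exp t * v t) + r * (exp t * h t)) \<longlongrightarrow> p * 0 + q * 0 + r * 0) at_top"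
      by (intro tendsto_intros Wlim vlim hp(3))
    thus ?thesis by (simp add: algebra_simps)
  qed
  have l1: "((\<lambda>t. exp t * z1 t) \<longlongrightarrow> 0) at_top" using lim2[of "-2" 1 0] by (simp add: z1_def)
  have l2: "((\<lambda>t. exp t * z2 t) \<longlongrightarrow> 0) at_top" using lim2[of 4 "a - 2" "-1"] by (simp add: z2_def)
  have S0: "\<And>t. t < 0 \<Longrightarrow> Sop N b h t = 0" by (simp add: Sop_def)
  have R1: "Sop N b h \<in> Xsp N b" using inX(1)[OF _ h0 h1 c2 bcS lS l1 l2] S0 by blast
  have R2: "\<And>t. t \<ge> 0 \<Longrightarrow> d1 (Sop N b h) t = z1 t" using inX(2)[OF _ h0 h1 c2 bcS lS l1 l2] S0 by blast
  have R3: "\<And>t. t \<ge> 0 \<Longrightarrow> d2 (Sop N b h) t = z2 t" using inX(3)[OF _ h0 h1 c2 bcS lS l1 l2] S0 by blast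
  show "Sop N b h \<in> Xsp N b" by (rule R1)
  show "Lop N (Sop N b h) = h"
  proof
    fix t :: real
    show "Lop N (Sop N b h) t = h t"
    proof (cases "t < 0")
      case True thus ?thesis using hp(1) by (simp add: Lop_def)
    next
      case False
      hence t: "t \<ge> 0" by simp
      show ?thesis using t unfolding Lop_def R2[OF t] R3[OF t] SW[OF t]
        by (simp add: z1_def z2_def a_def algebra_simps)
    qed
  qed
  show "wbd (Sop N b h) M" by (rule wbdI) (simp add: SW Wb)
  show "wbd (d1 (Sop N b h)) (3 * M)"
  proof (rule wbdI)
    fix t :: real assume t: "t \<ge> 0"
    have "\<bar>z1 t\<bar> \<le> 2 * \<bar>W t\<bar> + \<bar>v t\<bar>" by (simp add: z1_def)
    thus "\<bar>d1 (Sop N b h) t\<bar> \<le> 3 * M * exp (- t)" using Wb[OF t] vb[OF t] R2[OF t] by simp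
  qed
  show "wbd (d2 (Sop N b h)) ((\<bar>real N - 4\<bar> + 5) * M)"
  proof (rule wbdI)
    fix t :: real assume t: "t \<ge> 0"
    have "\<bar>z2 t\<bar> \<le> \<bar>4 * W t\<bar> + \<bar>(a - 2) * v t\<bar> + \<bar>- h t\<bar>"
      unfolding z2_def using abs_triangle_ineq[of "4 * W t + (a - 2) * v t" "- h t"]
        abs_triangle_ineq[of "4 * W t" "(a - 2) * v t"] by simp
    hence "\<bar>z2 t\<bar> \<le> 4 * \<bar>W t\<bar> + \<bar>a - 2\<bar> * \<bar>v t\<bar> + \<bar>h t\<bar>" by (simp add: abs_mult)
    also have "\<dots> \<le> 4 * (M * exp (- t)) + \<bar>a - 2\<bar> * (M * exp (- t)) + M * exp (- t)"
      using Wb[OF t] vb[OF t] wbd_abs[OF hb t] by (intro add_mono mult_left_mono) auto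
    also have "\<dots> = (\<bar>real N - 4\<bar> + 5) * M * exp (- t)" by (simp add: a_def algebra_simps)
    finally show "\<bar>d2 (Sop N b h) t\<bar> \<le> (\<bar>real N - 4\<bar> + 5) * M * exp (- t)" using R3[OF t] by simp
  qed
qed

lemma Lop_lin:
  assumes v: "v \<in> Xsp N b" and w: "w \<in> Xsp N b"
  shows "Lop N (\<lambda>t. a * v t + c * w t) = (\<lambda>t. a * Lop N v t + c * Lop N w t)"
proof
  fix t :: real
  show "Lop N (\<lambda>t. a * v t + c * w t) t = a * Lop N v t + c * Lop N w t"
    using Xlin(2,3)[OF v w, of t a c] by (cases "t < 0") (auto simp: Lop_def algebra_simps)
qed

lemma Lop_Y:
  assumes z: "z \<in> Xsp N b"
  shows "Lop N z \<in> Ysp"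
proof -
  note p = Xsp_props[OF z]
  have c: "continuous_on {0..} (Lop N z)"
  proof (rule continuous_on_eq[where f="\<lambda>t. - d2 z t + (real N - 4) * d1 z t + (2 * real N - 4) * z t"])
    show "continuous_on {0..} (\<lambda>t. - d2 z t + (real N - 4) * d1 z t + (2 * real N - 4) * z t)"
      using p by (auto intro!: continuous_intros)
  qed (auto simp: Lop_def)
  have "((\<lambda>t. - (exp t * d2 z t) + (real N - 4) * (exp t * d1 z t) + (2 * real N - 4) * (exp t * z t))
      \<longlongrightarrow> - 0 + (real N - 4) * 0 + (2 * real N - 4) * 0) at_top"
    by (intro tendsto_intros p)
  hence "((\<lambda>t. - (exp t * d2 z t) + (real N - 4) * (exp t * d1 z t) + (2 * real N - 4) * (exp t * z t))
      \<longlongrightarrow> 0) at_top" by simp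
  hence "((\<lambda>t. exp t * Lop N z t) \<longlongrightarrow> 0) at_top"
    by (rule Lim_transform_eventually)
       (auto intro!: eventually_at_top_linorderI[of 0] simp: Lop_def algebra_simps)
  thus ?thesis using c by (auto simp: Ysp_def Lop_def)
qed

lemma KER:
  assumes N: "N \<ge> 2" and z: "z \<in> Xsp N b" and L: "\<And>t. t \<ge> 0 \<Longrightarrow> Lop N z t = 0"
  shows "z = (\<lambda>t. 0)"
proof -
  define a where "a = real N - 2"
  have a0: "a \<ge> 0" using N by (simp add: a_def)
  note p = Xsp_props[OF z] and hz = Xsp_hd[OF z]
  have dd: "d2 z t = (a - 2) * d1 z t + 2 * a * z t" if "t \<ge> 0" for t
    using L[OF that] that by (simp add: Lop_def a_def algebra_simps)
  define v where "v t = d1 z t + 2 * z t" for t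
  have hv: "(v has_real_derivative a * v t) (at t within {0..})" if t: "t \<ge> 0" for t
  proof -
    have "(v has_real_derivative d2 z t + 2 * d1 z t) (at t within {0..})"
      unfolding v_def[abs_def] using hz t unfolding hdv_def by (intro DERIV_add DERIV_cmult) auto
    moreover have "d2 z t + 2 * d1 z t = a * v t" using dd[OF t] by (simp add: v_def algebra_simps)
    ultimately show ?thesis by simp
  qed
  have "\<exists>c. \<forall>t\<in>{0..}. exp (- (a * t)) * v t = c"
  proof (rule has_field_derivative_zero_constant)
    fix t :: real assume t: "t \<in> {0..}"
    have "((\<lambda>t. exp (- (a * t)) * v t) has_real_derivative
        (exp (- (a * t)) * (- a)) * v t + (a * v t) * exp (- (a * t))) (at t within {0..})"
      by (rule DERIV_mult) (use hv t in \<open>auto intro!: derivative_eq_intros\<close>)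
    thus "((\<lambda>t. exp (- (a * t)) * v t) has_real_derivative 0) (at t within {0..})"
      by (simp add: algebra_simps)
  qed simp
  then obtain c where c: "\<And>t. t \<ge> 0 \<Longrightarrow> exp (- (a * t)) * v t = c" by auto
  have vt: "v t = v 0 * exp (a * t)" if "t \<ge> 0" for t
    using c[OF that] c[of 0] by (simp add: exp_minus field_simps)
  have v0: "v 0 = 0"
  proof (rule ccontr)
    assume ne: "v 0 \<noteq> 0"
    have lim: "((\<lambda>t. exp t * v t) \<longlongrightarrow> 0) at_top"
    proof -
      have "((\<lambda>t. exp t * d1 z t + 2 * (exp t * z t)) \<longlongrightarrow> 0 + 2 * 0) at_top"
        by (intro tendsto_intros p)
      thus ?thesis by (simp add: v_def algebra_simps)
    qed
    have "eventually (\<lambda>t. dist (exp t * v t) 0 < \<bar>v 0\<bar>) at_top"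
      using tendstoD[OF lim] ne by auto
    then obtain T where T: "\<And>t. t \<ge> T \<Longrightarrow> \<bar>exp t * v t\<bar> < \<bar>v 0\<bar>"
      by (auto simp: eventually_at_top_linorder)
    define t where "t = max T 0"
    have t0: "t \<ge> 0" and tT: "t \<ge> T" by (auto simp: t_def)
    have "\<bar>exp t * v t\<bar> = \<bar>v 0\<bar> * (exp t * exp (a * t))"
      using vt[OF t0] by (simp add: abs_mult)
    also have "\<dots> \<ge> \<bar>v 0\<bar> * 1"
    proof (rule mult_left_mono)
      have "1 \<le> exp t" using t0 by simp
      moreover have "1 \<le> exp (a * t)" using t0 a0 by simp
      ultimately show "1 \<le> exp t * exp (a * t)" by (metis mult_mono' order.trans mult_1_left zero_le_one)
    qed simp
    finally show False using T[OF tT] by simp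
  qed
  have dz: "d1 z t = -2 * z t" if "t \<ge> 0" for t
  proof -
    have "v t = 0" using vt[OF that] v0 by simp
    thus ?thesis unfolding v_def by linarith
  qed
  have "\<exists>c. \<forall>t\<in>{0..}. exp (2 * t) * z t = c"
  proof (rule has_field_derivative_zero_constant)
    fix t :: real assume t: "t \<in> {0..}"
    have "((\<lambda>t. exp (2 * t) * z t) has_real_derivative
        (exp (2 * t) * 2) * z t + d1 z t * exp (2 * t)) (at t within {0..})"
      by (rule DERIV_mult) (use hz t in \<open>auto intro!: derivative_eq_intros simp: hdv_def\<close>)
    thus "((\<lambda>t. exp (2 * t) * z t) has_real_derivative 0) (at t within {0..})"
      using dz[of t] t by (simp add: algebra_simps)
  qed simp
  then obtain c2 where c2: "\<And>t. t \<ge> 0 \<Longrightarrow> exp (2 * t) * z t = c2" by auto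
  have zt: "z t = z 0 * exp (- (2 * t))" if "t \<ge> 0" for t
    using c2[OF that] c2[of 0] by (simp add: exp_minus field_simps)
  have z0: "z 0 = 0"
  proof (cases b)
    case Dir thus ?thesis using p(2) by (simp add: bc_holds_def)
  next
    case Nav
    hence "d1 z 0 - (real N - 2) * z 0 = 0" using p(2) by (simp add: bc_holds_def)
    hence "real N * z 0 = 0" using dz[of 0] by (simp add: algebra_simps)
    thus ?thesis using N by simp
  qed
  show ?thesis
  proof
    fix t :: real
    show "z t = 0" using p(1)[of t] zt[of t] z0 by (cases "t < 0") auto
  qed
qed

lemma AP:
  assumes N: "N \<ge> 2" and z: "z \<in> Xsp N b" and hb: "wbd (Lop N z) M"
  shows "wbd z M" "wbd (d1 z) (3 * M)" "wbd (d2 z) ((\<bar>real N - 4\<bar> + 5) * M)"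
    "z = Sop N b (Lop N z)"
proof -
  have hY: "Lop N z \<in> Ysp" by (rule Lop_Y[OF z])
  note S = S_main[OF N hY hb, of b]
  have D: "(\<lambda>t. 1 * z t + (-1) * Sop N b (Lop N z) t) \<in> Xsp N b" by (rule Xlin(1)[OF z S(1)])
  have "Lop N (\<lambda>t. 1 * z t + (-1) * Sop N b (Lop N z) t) = (\<lambda>t. 1 * Lop N z t + (-1) * Lop N (Sop N b (Lop N z)) t)"
    by (rule Lop_lin[OF z S(1)])
  also have "\<dots> = (\<lambda>t. 0)" using S(2) by simp
  finally have "(\<lambda>t. 1 * z t + (-1) * Sop N b (Lop N z) t) = (\<lambda>t. 0)"
    using KER[OF N D] by simp
  hence eq: "z = Sop N b (Lop N z)" by (auto simp: fun_eq_iff)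
  show "z = Sop N b (Lop N z)" by (rule eq)
  show "wbd z M" "wbd (d1 z) (3 * M)" "wbd (d2 z) ((\<bar>real N - 4\<bar> + 5) * M)"
    using S(3-5) eq[symmetric] by simp_all
qed

definition zof :: "(real \<Rightarrow>\<^sub>C real) \<Rightarrow> real \<Rightarrow> real" where
  "zof u t = (if t < 0 then 0 else exp (- t) * apply_bcontfun u t)"

lemma zof_props:
  "\<And>t. t < 0 \<Longrightarrow> zof u t = 0" "continuous_on {0..} (zof u)" "wbd (zof u) (norm u)"
proof -
  show "\<And>t. t < 0 \<Longrightarrow> zof u t = 0" by (simp add: zof_def)
  show "continuous_on {0..} (zof u)"
    by (rule continuous_on_eq[where f="\<lambda>t. exp (- t) * apply_bcontfun u t"])
       (auto intro!: continuous_intros simp: zof_def)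
  show "wbd (zof u) (norm u)"
    unfolding wbd_def zof_def using norm_bounded[of u]
    by (auto simp: abs_mult exp_minus field_simps)
qed

lemma zof_diff: "wbd (\<lambda>t. zof u1 t - zof u2 t) (dist u1 u2)"
  unfolding wbd_def zof_def
proof (intro allI impI)
  fix t :: real assume t: "t \<ge> 0"
  have "exp t * \<bar>exp (- t) * apply_bcontfun u1 t - exp (- t) * apply_bcontfun u2 t\<bar>
      = dist (apply_bcontfun u1 t) (apply_bcontfun u2 t)"
    by (simp add: dist_real_def abs_mult exp_minus field_simps flip: right_diff_distrib)
  also have "\<dots> \<le> dist u1 u2" by (rule dist_bounded)
  finally show "exp t * \<bar>(if t < 0 then 0 else exp (- t) * apply_bcontfun u1 t) -
      (if t < 0 then 0 else exp (- t) * apply_bcontfun u2 t)\<bar> \<le> dist u1 u2" using t by simp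
qed

lemma ext_bcontfun:
  fixes s :: "real \<Rightarrow> real"
  assumes c: "continuous_on {0..} s" and b: "wbd s R"
  shows "(\<lambda>t. exp (max t 0) * s (max t 0)) \<in> bcontfun"
    "\<And>t. \<bar>exp (max t 0) * s (max t 0)\<bar> \<le> R"
proof -
  have c2: "continuous_on UNIV (\<lambda>t. exp (max t 0) * s (max t 0))"
  proof -
    have "continuous_on UNIV (\<lambda>t. max t (0::real))" by (intro continuous_intros)
    moreover have "continuous_on {0..} (\<lambda>x. exp x * s x)" using c by (intro continuous_intros)
    ultimately show ?thesis
      by (intro continuous_on_compose2[where t="{0..}" and g="\<lambda>x. exp x * s x" and f="\<lambda>t. max t 0", simplified]) auto
  qed
  show bd: "\<And>t. \<bar>exp (max t 0) * s (max t 0)\<bar> \<le> R"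
    using b unfolding wbd_def by (simp add: abs_mult)
  show "(\<lambda>t. exp (max t 0) * s (max t 0)) \<in> bcontfun"
    unfolding bcontfun_def using c2 bd by (auto simp: bounded_iff)
qed

lemma FP:
  fixes \<Phi> :: "(real \<Rightarrow> real) \<Rightarrow> real \<Rightarrow> real"
  assumes N: "N \<ge> 2" and R: "R > 0" and k: "0 \<le> k" "k < 1"
    and H1: "\<And>z. (\<forall>t<0. z t = 0) \<Longrightarrow> continuous_on {0..} z \<Longrightarrow> wbd z R \<Longrightarrow> \<Phi> z \<in> Ysp \<and> wbd (\<Phi> z) R"
    and H2: "\<And>z1 z2 D. (\<forall>t<0. z1 t = 0) \<Longrightarrow> continuous_on {0..} z1 \<Longrightarrow> wbd z1 R \<Longrightarrow>
       (\<forall>t<0. z2 t = 0) \<Longrightarrow> continuous_on {0..} z2 \<Longrightarrow> wbd z2 R \<Longrightarrow>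
       wbd (\<lambda>t. z1 t - z2 t) D \<Longrightarrow> wbd (\<lambda>t. \<Phi> z1 t - \<Phi> z2 t) (k * D)"
  shows "\<exists>z \<in> Xsp N b. wbd z R \<and> Lop N z = \<Phi> z"
proof -
  define S where "S = cball (0 :: real \<Rightarrow>\<^sub>C real) R"
  have inS: "u \<in> S \<longleftrightarrow> norm u \<le> R" for u by (simp add: S_def dist_norm)
  have zS: "wbd (zof u) R" if "u \<in> S" for u
    using zof_props(3)[of u] that unfolding inS wbd_def by (meson order.trans)
  have Hz: "\<Phi> (zof u) \<in> Ysp \<and> wbd (\<Phi> (zof u)) R" if "u \<in> S" for u
    using H1[OF _ zof_props(2) zS[OF that]] zof_props(1) by blast
  define sof where "sof u = Sop N b (\<Phi> (zof u))" for u
  have sX: "sof u \<in> Xsp N b" "Lop N (sof u) = \<Phi> (zof u)" "wbd (sof u) R" if "u \<in> S" for u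
    using S_main(1-3)[OF N conjunct1[OF Hz[OF that]] conjunct2[OF Hz[OF that]]] by (auto simp: sof_def)
  define T where "T u = Bcontfun (\<lambda>t. exp (max t 0) * sof u (max t 0))" for u
  have Tapp: "apply_bcontfun (T u) = (\<lambda>t. exp (max t 0) * sof u (max t 0))" if "u \<in> S" for u
    unfolding T_def using ext_bcontfun(1)[OF Xsp_props(7)[OF sX(1)[OF that]] sX(3)[OF that]]
    by (simp add: Bcontfun_inverse)
  have TS: "T ` S \<subseteq> S"
  proof
    fix x assume "x \<in> T ` S"
    then obtain u where u: "u \<in> S" "x = T u" by auto
    have "norm (T u) \<le> R"
      by (rule norm_bound) (use ext_bcontfun(2)[OF Xsp_props(7)[OF sX(1)[OF u(1)]] sX(3)[OF u(1)]] Tapp[OF u(1)] in auto)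
    thus "x \<in> S" using u inS by simp
  qed
  have lip: "dist (T u1) (T u2) \<le> k * dist u1 u2" if u1: "u1 \<in> S" and u2: "u2 \<in> S" for u1 u2
  proof (rule dist_bound)
    fix x :: real
    let ?D = "dist u1 u2"
    have Hd: "wbd (\<lambda>t. \<Phi> (zof u1) t - \<Phi> (zof u2) t) (k * ?D)"
      by (rule H2[OF _ zof_props(2) zS[OF u1] _ zof_props(2) zS[OF u2] zof_diff]) (auto simp: zof_props(1))
    have dX: "(\<lambda>t. 1 * sof u1 t + (-1) * sof u2 t) \<in> Xsp N b" by (rule Xlin(1)[OF sX(1)[OF u1] sX(1)[OF u2]])
    have "Lop N (\<lambda>t. 1 * sof u1 t + (-1) * sof u2 t) = (\<lambda>t. 1 * Lop N (sof u1) t + (-1) * Lop N (sof u2) t)"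
      by (rule Lop_lin[OF sX(1)[OF u1] sX(1)[OF u2]])
    also have "\<dots> = (\<lambda>t. \<Phi> (zof u1) t - \<Phi> (zof u2) t)" using sX(2)[OF u1] sX(2)[OF u2] by simp
    finally have "wbd (Lop N (\<lambda>t. 1 * sof u1 t + (-1) * sof u2 t)) (k * ?D)" using Hd by simp
    from AP(1)[OF N dX this] have W: "wbd (\<lambda>t. sof u1 t - sof u2 t) (k * ?D)" by simp
    have "\<bar>exp (max x 0) * sof u1 (max x 0) - exp (max x 0) * sof u2 (max x 0)\<bar>
        = exp (max x 0) * \<bar>sof u1 (max x 0) - sof u2 (max x 0)\<bar>"
      by (simp add: abs_mult flip: right_diff_distrib)
    also have "\<dots> \<le> k * ?D" using W unfolding wbd_def by simp
    finally show "dist (apply_bcontfun (T u1) x) (apply_bcontfun (T u2) x) \<le> k * ?D"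
      by (simp add: Tapp[OF u1] Tapp[OF u2] dist_real_def)
  qed
  have "\<exists>!u\<in>S. T u = u"
  proof (rule Banach_fix[OF _ _ k TS lip])
    show "complete S" unfolding S_def by (simp add: complete_eq_closed)
    show "S \<noteq> {}" using R inS[of 0] by auto
  qed auto
  then obtain u where u: "u \<in> S" "T u = u" by auto
  have eq: "zof u = sof u"
  proof
    fix t :: real
    show "zof u t = sof u t"
    proof (cases "t < 0")
      case True thus ?thesis using Xsp_props(1)[OF sX(1)[OF u(1)]] by (simp add: zof_def)
    next
      case False
      have "apply_bcontfun u t = exp t * sof u t"
        using arg_cong[OF u(2), of "\<lambda>f. apply_bcontfun f t"] Tapp[OF u(1)] False by simp
      thus ?thesis using False by (simp add: zof_def exp_minus field_simps)
    qed
  qed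
  show ?thesis
    using sX[OF u(1)] zS[OF u(1)] eq by (intro bexI[of _ "zof u"]) auto
qed

lemma wbd_mono: "wbd h M \<Longrightarrow> M \<le> M' \<Longrightarrow> wbd h M'"
  unfolding wbd_def by (meson order.trans)

lemma YN_le: "wbd h M \<Longrightarrow> Ynorm h \<le> M"
  unfolding Ynorm_def wbd_def by (rule cSUP_least) auto

lemma wbd_bdd: "wbd h M \<Longrightarrow> bdd_above ((\<lambda>t. exp t * \<bar>h t\<bar>) ` {0..})"
  unfolding wbd_def bdd_above_def by auto

lemma YN_ge:
  assumes "continuous_on {0..} h" "((\<lambda>t. exp t * h t) \<longlongrightarrow> 0) at_top"
  shows "wbd h (Ynorm h)"
proof -
  obtain M where M: "wbd h M" using wbd_exists[OF assms] by auto
  show ?thesis unfolding wbd_def Ynorm_def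
    by (auto intro!: cSUP_upper wbd_bdd[OF M])
qed

lemma YN_nonneg:
  assumes "continuous_on {0..} h" "((\<lambda>t. exp t * h t) \<longlongrightarrow> 0) at_top"
  shows "Ynorm h \<ge> 0"
  using wbd_nonneg[OF YN_ge[OF assms]] .

lemma XN_le:
  assumes "wbd z A" "wbd (d1 z) B" "wbd (d2 z) C"
  shows "Xnorm z \<le> A + B + C"
  using YN_le[OF assms(1)] YN_le[OF assms(2)] YN_le[OF assms(3)]
  unfolding Xnorm_def Ynorm_def by linarith

lemma XN_ge:
  assumes z: "z \<in> Xsp N b"
  shows "wbd z (Xnorm z)" "wbd (d1 z) (Xnorm z)" "wbd (d2 z) (Xnorm z)" "Xnorm z \<ge> 0"
proof -
  note p = Xsp_props[OF z]
  have c2: "continuous_on {0..} (d2 z)" by (rule p(3))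
  have a: "wbd z (Ynorm z)" by (rule YN_ge[OF p(7) p(4)])
  have b: "wbd (d1 z) (Ynorm (d1 z))" by (rule YN_ge[OF p(8) p(5)])
  have c: "wbd (d2 z) (Ynorm (d2 z))" by (rule YN_ge[OF c2 p(6)])
  have X: "Xnorm z = Ynorm z + Ynorm (d1 z) + Ynorm (d2 z)" by (simp add: Xnorm_def Ynorm_def)
  note n = wbd_nonneg[OF a] wbd_nonneg[OF b] wbd_nonneg[OF c]
  show "wbd z (Xnorm z)" by (rule wbd_mono[OF a]) (use X n in linarith)
  show "wbd (d1 z) (Xnorm z)" by (rule wbd_mono[OF b]) (use X n in linarith)
  show "wbd (d2 z) (Xnorm z)" by (rule wbd_mono[OF c]) (use X n in linarith)
  show "Xnorm z \<ge> 0" using X n by linarith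
qed

lemma wbd_prod:
  assumes "wbd u A" "wbd w B"
  shows "wbd (\<lambda>t. u t * w t) (A * B)"
  unfolding wbd_def
proof (intro allI impI)
  fix t :: real assume t: "t \<ge> 0"
  have A: "exp t * \<bar>u t\<bar> \<le> A" and B: "exp t * \<bar>w t\<bar> \<le> B" using assms t unfolding wbd_def by auto
  have e1: "1 \<le> exp t" using t by simp
  have "1 * (exp t * \<bar>u t * w t\<bar>) \<le> exp t * (exp t * \<bar>u t * w t\<bar>)"
    by (rule mult_right_mono[OF e1]) simp
  hence "exp t * \<bar>u t * w t\<bar> \<le> exp t * (exp t * \<bar>u t * w t\<bar>)" by simp
  also have "\<dots> = (exp t * \<bar>u t\<bar>) * (exp t * \<bar>w t\<bar>)" by (simp add: abs_mult algebra_simps)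
  also have "\<dots> \<le> A * B" using A B wbd_nonneg[OF assms(1)] by (intro mult_mono) auto
  finally show "exp t * \<bar>u t * w t\<bar> \<le> A * B" .
qed

lemma wbd_add: "wbd u A \<Longrightarrow> wbd w B \<Longrightarrow> wbd (\<lambda>t. u t + w t) (A + B)"
  unfolding wbd_def
proof (intro allI impI)
  fix t :: real assume "\<forall>t\<ge>0. exp t * \<bar>u t\<bar> \<le> A" "\<forall>t\<ge>0. exp t * \<bar>w t\<bar> \<le> B" "t \<ge> 0"
  moreover have "exp t * \<bar>u t + w t\<bar> \<le> exp t * \<bar>u t\<bar> + exp t * \<bar>w t\<bar>"
    by (simp add: abs_triangle_ineq flip: distrib_left)
  ultimately show "exp t * \<bar>u t + w t\<bar> \<le> A + B" by force
qed

lemma wbd_cmult: "wbd u A \<Longrightarrow> wbd (\<lambda>t. c * u t) (\<bar>c\<bar> * A)"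
  unfolding wbd_def by (auto simp: abs_mult mult.left_commute intro: mult_left_mono)

lemma wbd_cong: "wbd u A \<Longrightarrow> (\<And>t. t \<ge> 0 \<Longrightarrow> w t = u t) \<Longrightarrow> wbd w A"
  unfolding wbd_def by auto

lemma wbd_zero: "wbd u 0 \<Longrightarrow> t \<ge> 0 \<Longrightarrow> u t = 0"
  unfolding wbd_def by (metis abs_le_zero_iff exp_gt_zero mult_le_0_iff not_le)

lemma YI:
  fixes h B :: "real \<Rightarrow> real"
  assumes "\<And>t. t < 0 \<Longrightarrow> h t = 0" "continuous_on {0..} h"
    "\<And>t. t \<ge> 0 \<Longrightarrow> \<bar>exp t * h t\<bar> \<le> B t" "(B \<longlongrightarrow> 0) at_top"
  shows "h \<in> Ysp"
proof -
  have "((\<lambda>t. exp t * h t) \<longlongrightarrow> 0) at_top"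
    by (rule Lim_null_comparison[OF _ assms(4)]) (use assms(3) in \<open>auto intro!: eventually_at_top_linorderI[of 0]\<close>)
  thus ?thesis using assms(1,2) by (auto simp: Ysp_def)
qed

lemma zero_X: "(\<lambda>t. 0) \<in> Xsp N b" "\<And>t. t \<ge> 0 \<Longrightarrow> d1 (\<lambda>t. 0) t = 0" "\<And>t. t \<ge> 0 \<Longrightarrow> d2 (\<lambda>t. 0) t = 0"
proof -
  have h: "hdv (\<lambda>t. 0) (\<lambda>t. 0)" by (simp add: hdv_def)
  have bc: "case b of Dir \<Rightarrow> (0::real) = 0 | Nav \<Rightarrow> (0::real) - (real N - 2) * 0 = 0" by (cases b) auto
  show "(\<lambda>t. 0) \<in> Xsp N b" using inX(1)[of "\<lambda>t. 0", OF _ h h _ bc] by auto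
  show "\<And>t. t \<ge> 0 \<Longrightarrow> d1 (\<lambda>t. 0) t = 0" using d1_eq[OF h] by simp
  show "\<And>t. t \<ge> 0 \<Longrightarrow> d2 (\<lambda>t. 0) t = 0" using d1_eq[OF h] unfolding d2_def
    by (metis d1_eq hd_cong h)
qed

definition fF :: "nat \<Rightarrow> (real \<Rightarrow> real) \<Rightarrow> real \<Rightarrow> real" where
  "fF N g t = (if t < 0 then 0 else exp ((real N - 4) * t) * (LBINT s=0..exp (- t). g s))"

lemma fF_Y:
  assumes g: "set_integrable lborel {0..1} g"
    and lim: "((\<lambda>t. exp ((real N - 3) * t) * (LBINT s=0..exp (- t). g s)) \<longlongrightarrow> 0) at_top"
  shows "fF N g \<in> Ysp"
proof -
  have gi: "g integrable_on {0..1}" using set_borel_integral_eq_integral(1)[OF g] .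
  have G: "(LBINT s=0..exp (- t). g s) = integral {0..exp (- t)} g" if "t \<ge> 0" for t
  proof -
    have "set_integrable lborel {0..exp (- t)} g"
      by (rule set_integrable_subset[OF g]) (use that in auto)
    from interval_integral_eq_integral[OF _ this] show ?thesis by (simp add: zero_ereal_def)
  qed
  have cI: "continuous_on {0..1} (\<lambda>x. integral {0..x} g)" by (rule indefinite_integral_continuous_1[OF gi])
  have cG: "continuous_on {0..} (\<lambda>t. integral {0..exp (- t)} g)"
    by (rule continuous_on_compose2[OF cI, where f="\<lambda>t. exp (- t)"]) (auto intro!: continuous_intros)
  have c: "continuous_on {0..} (fF N g)"
    by (rule continuous_on_eq[where f="\<lambda>t. exp ((real N - 4) * t) * integral {0..exp (- t)} g"])
       (use cG in \<open>auto intro!: continuous_intros simp: fF_def G\<close>)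
  have "((\<lambda>t. exp t * fF N g t) \<longlongrightarrow> 0) at_top"
    using lim by (rule Lim_transform_eventually)
      (auto intro!: eventually_at_top_linorderI[of 0] simp: fF_def algebra_simps simp flip: exp_add)
  thus ?thesis using c by (auto simp: Ysp_def fF_def)
qed

lemma Fmap_eq: "t \<ge> 0 \<Longrightarrow> Fmap N g z lam t = Lop N z t - (real N - 1) / 2 * (z t)\<^sup>2 - lam * fF N g t"
  by (simp add: Fmap_def Lop_def fF_def)

lemma Fmap_neg: "t < 0 \<Longrightarrow> Fmap N g z lam t = 0"
  by (simp add: Fmap_def)

lemma APX:
  assumes N: "N \<ge> 2" and z: "z \<in> Xsp N b" and hb: "wbd (Lop N z) M"
  shows "Xnorm z \<le> (9 + \<bar>real N - 4\<bar>) * M"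
  using XN_le[OF AP(1-3)[OF N z hb]] by (simp add: algebra_simps)

lemma prod_decay:
  assumes "wbd z A" "wbd w B" "t \<ge> 0"
  shows "exp t * \<bar>z t * w t\<bar> \<le> A * B * exp (- t)"
proof -
  have a: "exp t * \<bar>z t\<bar> \<le> A" and b: "exp t * \<bar>w t\<bar> \<le> B" using assms unfolding wbd_def by auto
  have "exp t * (exp t * \<bar>z t * w t\<bar>) = (exp t * \<bar>z t\<bar>) * (exp t * \<bar>w t\<bar>)" by (simp add: abs_mult algebra_simps)
  also have "\<dots> \<le> A * B" using a b wbd_nonneg[OF assms(1)] by (intro mult_mono) auto
  finally have "exp t * (exp t * \<bar>z t * w t\<bar>) \<le> A * B" .
  thus ?thesis by (simp add: exp_minus field_simps)
qed

lemma YQ: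
  assumes cz: "continuous_on {0..} z" and cw: "continuous_on {0..} w" and z: "wbd z A" and w: "wbd w B"
    and h: "h \<in> Ysp"
  shows "(\<lambda>t. if t < 0 then 0 else c * z t * w t + h t) \<in> Ysp"
proof (rule YI[where B="\<lambda>t. \<bar>c\<bar> * (A * B * exp (- t)) + \<bar>exp t * h t\<bar>"])
  note hp = Ysp_props[OF h]
  show "continuous_on {0..} (\<lambda>t. if t < 0 then 0 else c * z t * w t + h t)"
    by (rule continuous_on_eq[where f="\<lambda>t. c * z t * w t + h t"]) (use cz cw hp in \<open>auto intro!: continuous_intros\<close>)
  fix t :: real
  show "t < 0 \<Longrightarrow> (if t < 0 then 0 else c * z t * w t + h t) = 0" by simp
  assume t: "t \<ge> 0"
  have "\<bar>exp t * (c * z t * w t + h t)\<bar> \<le> \<bar>c\<bar> * (exp t * \<bar>z t * w t\<bar>) + \<bar>exp t * h t\<bar>"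
    by (simp add: abs_mult distrib_left abs_triangle_ineq mult.left_commute
          order.trans[OF abs_triangle_ineq] mult.assoc)
  also have "\<dots> \<le> \<bar>c\<bar> * (A * B * exp (- t)) + \<bar>exp t * h t\<bar>"
    using prod_decay[OF z w t] by (simp add: mult_left_mono)
  finally show "\<bar>exp t * (if t < 0 then 0 else c * z t * w t + h t)\<bar> \<le> \<bar>c\<bar> * (A * B * exp (- t)) + \<bar>exp t * h t\<bar>"
    using t by simp
next
  note hp = Ysp_props[OF h]
  have "((\<lambda>t. \<bar>c\<bar> * (A * B * exp (- t)) + \<bar>exp t * h t\<bar>) \<longlongrightarrow> \<bar>c\<bar> * (A * B * 0) + \<bar>0\<bar>) at_top"
    by (intro tendsto_intros hp(3) filterlim_compose[OF exp_at_bot filterlim_uminus_at_bot_at_top])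
  thus "((\<lambda>t. \<bar>c\<bar> * (A * B * exp (- t)) + \<bar>exp t * h t\<bar>) \<longlongrightarrow> 0) at_top" by simp
qed

lemma Xdiff:
  assumes v: "v \<in> Xsp N b" and w: "w \<in> Xsp N b"
  shows "(\<lambda>t. v t - w t) \<in> Xsp N b" "Lop N (\<lambda>t. v t - w t) = (\<lambda>t. Lop N v t - Lop N w t)"
proof -
  have e: "(\<lambda>t. v t - w t) = (\<lambda>t. 1 * v t + (-1) * w t)" by simp
  show "(\<lambda>t. v t - w t) \<in> Xsp N b" unfolding e by (rule Xlin(1)[OF v w])
  show "Lop N (\<lambda>t. v t - w t) = (\<lambda>t. Lop N v t - Lop N w t)" unfolding e Lop_lin[OF v w] by simp
qed

lemma Xsum:
  assumes v: "v \<in> Xsp N b" and w: "w \<in> Xsp N b"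
  shows "(\<lambda>t. v t + w t) \<in> Xsp N b" "Lop N (\<lambda>t. v t + w t) = (\<lambda>t. Lop N v t + Lop N w t)"
proof -
  have e: "(\<lambda>t. v t + w t) = (\<lambda>t. 1 * v t + 1 * w t)" by simp
  show "(\<lambda>t. v t + w t) \<in> Xsp N b" unfolding e by (rule Xlin(1)[OF v w])
  show "Lop N (\<lambda>t. v t + w t) = (\<lambda>t. Lop N v t + Lop N w t)" unfolding e Lop_lin[OF v w] by simp
qed

lemma Xcomb:
  assumes v: "v \<in> Xsp N b" and w: "w \<in> Xsp N b"
  shows "(\<lambda>t. v t - c * w t) \<in> Xsp N b" "Lop N (\<lambda>t. v t - c * w t) = (\<lambda>t. Lop N v t - c * Lop N w t)"
proof -
  have e: "(\<lambda>t. v t - c * w t) = (\<lambda>t. 1 * v t + (- c) * w t)" by simp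
  show "(\<lambda>t. v t - c * w t) \<in> Xsp N b" unfolding e by (rule Xlin(1)[OF v w])
  show "Lop N (\<lambda>t. v t - c * w t) = (\<lambda>t. Lop N v t - c * Lop N w t)" unfolding e Lop_lin[OF v w] by simp
qed

lemma X_wbd: "z \<in> Xsp N b \<Longrightarrow> wbd z (Ynorm z)"
  using YN_ge[OF Xsp_props(7,4)] by blast

lemma LIN_INJ:
  assumes N: "N \<ge> 2" and q: "wbd q A" and KA: "(real N - 1) * A < 1"
    and w: "w \<in> Xsp N b" and L: "\<And>t. t \<ge> 0 \<Longrightarrow> Lop N w t = (real N - 1) * q t * w t"
  shows "w = (\<lambda>t. 0)"
proof -
  define D where "D = Ynorm w"
  have wD: "wbd w D" unfolding D_def by (rule X_wbd[OF w])
  have K: "real N - 1 \<ge> 0" using N by simp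
  have A0: "A \<ge> 0" using wbd_nonneg[OF q] .
  have "wbd (\<lambda>t. (real N - 1) * (q t * w t)) (\<bar>real N - 1\<bar> * (A * D))"
    by (rule wbd_cmult[OF wbd_prod[OF q wD]])
  moreover have "\<bar>real N - 1\<bar> * (A * D) = (real N - 1) * A * D" using K by simp
  ultimately have "wbd (\<lambda>t. (real N - 1) * (q t * w t)) ((real N - 1) * A * D)" by simp
  hence "wbd (Lop N w) ((real N - 1) * A * D)"
    by (rule wbd_cong) (use L in \<open>auto simp: algebra_simps\<close>)
  from AP(1)[OF N w this] have "wbd w ((real N - 1) * A * D)" .
  hence "D \<le> (real N - 1) * A * D" unfolding D_def by (rule YN_le)
  moreover have "D \<ge> 0" using wbd_nonneg[OF wD] .
  ultimately have "D = 0" using KA by (metis mult_le_cancel_right1 not_le order_antisym mult.commute)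
  hence "wbd w 0" using wD by simp
  show ?thesis
  proof
    fix t :: real
    show "w t = 0" using wbd_zero[OF \<open>wbd w 0\<close>, of t] Xsp_props(1)[OF w, of t] by (cases "t < 0") auto
  qed
qed

lemma LIN_FP:
  assumes N: "N \<ge> 2" and z: "z \<in> Xsp N b" and zr: "wbd z \<rho>" and K\<rho>: "(real N - 1) * \<rho> \<le> 1/4"
    and h: "h \<in> Ysp" and hb: "wbd h Hn"
  shows "\<exists>w\<in>Xsp N b. wbd w (2 * Hn + 1) \<and>
      Lop N w = (\<lambda>t. if t < 0 then 0 else (real N - 1) * z t * w t + h t)"
proof -
  define K where "K = real N - 1"
  have K0: "K \<ge> 0" using N by (simp add: K_def)
  have r0: "\<rho> \<ge> 0" using wbd_nonneg[OF zr] .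
  have H0: "Hn \<ge> 0" using wbd_nonneg[OF hb] .
  have cz: "continuous_on {0..} z" by (rule Xsp_props(7)[OF z])
  show ?thesis unfolding K_def[symmetric]
  proof (rule FP[OF N, where \<Phi>="\<lambda>w. (\<lambda>t. if t < 0 then 0 else K * z t * w t + h t)" and k="K * \<rho>"])
    show "0 < 2 * Hn + 1" using H0 by simp
    show "0 \<le> K * \<rho>" using K0 r0 by simp
    show "K * \<rho> < 1" using K\<rho> by (simp add: K_def)
  next
    fix w :: "real \<Rightarrow> real"
    assume w0: "\<forall>t<0. w t = 0" and cw: "continuous_on {0..} w" and wb: "wbd w (2 * Hn + 1)"
    show "(\<lambda>t. if t < 0 then 0 else K * z t * w t + h t) \<in> Ysp \<and>
          wbd (\<lambda>t. if t < 0 then 0 else K * z t * w t + h t) (2 * Hn + 1)"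
    proof
      show "(\<lambda>t. if t < 0 then 0 else K * z t * w t + h t) \<in> Ysp" by (rule YQ[OF cz cw zr wb h])
      have "wbd (\<lambda>t. K * (z t * w t) + h t) (\<bar>K\<bar> * (\<rho> * (2 * Hn + 1)) + Hn)"
        by (rule wbd_add[OF wbd_cmult[OF wbd_prod[OF zr wb]] hb])
      moreover have "\<bar>K\<bar> * (\<rho> * (2 * Hn + 1)) + Hn \<le> 2 * Hn + 1"
      proof -
        have "\<bar>K\<bar> * (\<rho> * (2 * Hn + 1)) = (K * \<rho>) * (2 * Hn + 1)" using K0 by simp
        also have "\<dots> \<le> (1/4) * (2 * Hn + 1)" using K\<rho> H0 by (intro mult_right_mono) (auto simp: K_def)
        moreover have "(1/4) * (2 * Hn + 1) = Hn / 2 + 1/4" by simp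
        ultimately show ?thesis using H0 by linarith
      qed
      ultimately have "wbd (\<lambda>t. K * (z t * w t) + h t) (2 * Hn + 1)" by (rule wbd_mono)
      thus "wbd (\<lambda>t. if t < 0 then 0 else K * z t * w t + h t) (2 * Hn + 1)"
        by (rule wbd_cong) (simp add: mult.assoc)
    qed
  next
    fix w1 w2 :: "real \<Rightarrow> real" and D :: real
    assume "wbd (\<lambda>t. w1 t - w2 t) D"
    from wbd_cmult[OF wbd_prod[OF zr this], of K]
    show "wbd (\<lambda>t. (if t < 0 then 0 else K * z t * w1 t + h t) - (if t < 0 then 0 else K * z t * w2 t + h t)) (K * \<rho> * D)"
      by (rule wbd_cong[OF wbd_mono]) (use K0 in \<open>auto simp: algebra_simps\<close>)
  qed
qed

lemma NL_FP:
  assumes N: "N \<ge> 2" and fY: "f \<in> Ysp" and fb: "wbd f F0" and r: "\<rho> > 0"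
    and K\<rho>: "(real N - 1) * \<rho> \<le> 1/4" and lam: "\<bar>lam\<bar> * F0 \<le> \<rho> / 2"
  shows "\<exists>z\<in>Xsp N b. wbd z \<rho> \<and>
      Lop N z = (\<lambda>t. if t < 0 then 0 else (real N - 1) / 2 * (z t)\<^sup>2 + lam * f t)"
proof -
  define K where "K = real N - 1"
  have K0: "K \<ge> 0" using N by (simp add: K_def)
  have F00: "F0 \<ge> 0" using wbd_nonneg[OF fb] .
  have fl: "(\<lambda>t. lam * f t) \<in> Ysp"
  proof -
    note fp = Ysp_props[OF fY]
    have "((\<lambda>t. lam * (exp t * f t)) \<longlongrightarrow> lam * 0) at_top" by (intro tendsto_intros fp(3))
    thus ?thesis using fp(1,2) by (auto simp: Ysp_def algebra_simps intro!: continuous_intros)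
  qed
  have sq: "(z t)\<^sup>2 = z t * z t" for z :: "real \<Rightarrow> real" and t by (simp add: power2_eq_square)
  show ?thesis unfolding K_def[symmetric]
  proof (rule FP[OF N r, where \<Phi>="\<lambda>z. (\<lambda>t. if t < 0 then 0 else K / 2 * (z t)\<^sup>2 + lam * f t)" and k="K * \<rho>"])
    show "0 \<le> K * \<rho>" using K0 r by simp
    show "K * \<rho> < 1" using K\<rho> by (simp add: K_def)
  next
    fix z :: "real \<Rightarrow> real"
    assume z0: "\<forall>t<0. z t = 0" and cz: "continuous_on {0..} z" and zb: "wbd z \<rho>"
    show "(\<lambda>t. if t < 0 then 0 else K / 2 * (z t)\<^sup>2 + lam * f t) \<in> Ysp \<and>
          wbd (\<lambda>t. if t < 0 then 0 else K / 2 * (z t)\<^sup>2 + lam * f t) \<rho>"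
    proof
      have e: "(\<lambda>t. if t < 0 then 0 else K / 2 * (z t)\<^sup>2 + lam * f t) =
          (\<lambda>t. if t < 0 then 0 else K / 2 * z t * z t + lam * f t)" by (rule ext) (simp add: power2_eq_square)
      show "(\<lambda>t. if t < 0 then 0 else K / 2 * (z t)\<^sup>2 + lam * f t) \<in> Ysp"
        unfolding e by (rule YQ[OF cz cz zb zb fl])
      have "wbd (\<lambda>t. K/2 * (z t * z t) + lam * f t) (\<bar>K/2\<bar> * (\<rho> * \<rho>) + \<bar>lam\<bar> * F0)"
        by (rule wbd_add[OF wbd_cmult[OF wbd_prod[OF zb zb]] wbd_cmult[OF fb]])
      moreover have "\<bar>K/2\<bar> * (\<rho> * \<rho>) + \<bar>lam\<bar> * F0 \<le> \<rho>"
      proof -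
        have "\<bar>K/2\<bar> * (\<rho> * \<rho>) = (K * \<rho>) * \<rho> / 2" using K0 by simp
        also have "\<dots> \<le> (1/4) * \<rho> / 2" using K\<rho> r by (intro divide_right_mono mult_right_mono) (auto simp: K_def)
        finally show ?thesis using lam r by linarith
      qed
      ultimately have "wbd (\<lambda>t. K/2 * (z t * z t) + lam * f t) \<rho>" by (rule wbd_mono)
      thus "wbd (\<lambda>t. if t < 0 then 0 else K / 2 * (z t)\<^sup>2 + lam * f t) \<rho>"
        by (rule wbd_cong) (simp add: sq)
    qed
  next
    fix z1 z2 :: "real \<Rightarrow> real" and D :: real
    assume "wbd z1 \<rho>" "wbd z2 \<rho>" and d: "wbd (\<lambda>t. z1 t - z2 t) D"
    have s: "wbd (\<lambda>t. z1 t + z2 t) (\<rho> + \<rho>)" by (rule wbd_add) fact+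
    from wbd_cmult[OF wbd_prod[OF s d], of "K/2"]
    have "wbd (\<lambda>t. K / 2 * ((z1 t + z2 t) * (z1 t - z2 t))) (K * \<rho> * D)"
      using K0 by (simp add: algebra_simps)
    thus "wbd (\<lambda>t. (if t < 0 then 0 else K / 2 * (z1 t)\<^sup>2 + lam * f t) - (if t < 0 then 0 else K / 2 * (z2 t)\<^sup>2 + lam * f t)) (K * \<rho> * D)"
      by (rule wbd_cong) (simp add: power2_eq_square algebra_simps)
  qed
qed

lemma UNIQ:
  assumes N: "N \<ge> 2" and z: "z \<in> Xsp N b" "wbd z A" and z': "z' \<in> Xsp N b" "wbd z' B"
    and KAB: "(real N - 1) * ((A + B) / 2) < 1"
    and L: "\<And>t. t \<ge> 0 \<Longrightarrow> Lop N z t = (real N - 1) / 2 * (z t)\<^sup>2 + lam * f t"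
    and L': "\<And>t. t \<ge> 0 \<Longrightarrow> Lop N z' t = (real N - 1) / 2 * (z' t)\<^sup>2 + lam * f t"
  shows "z = z'"
proof -
  have q: "wbd (\<lambda>t. (1/2) * (z t + z' t)) (\<bar>1/2\<bar> * (A + B))" by (rule wbd_cmult[OF wbd_add[OF z(2) z'(2)]])
  have "(\<lambda>t. z t - z' t) = (\<lambda>t. 0)"
  proof (rule LIN_INJ[OF N q _ Xdiff(1)[OF z(1) z'(1)]])
    show "(real N - 1) * (\<bar>1/2\<bar> * (A + B)) < 1" using KAB by simp
    fix t :: real assume t: "t \<ge> 0"
    show "Lop N (\<lambda>t. z t - z' t) t = (real N - 1) * ((1/2) * (z t + z' t)) * (z t - z' t)"
      unfolding Xdiff(2)[OF z(1) z'(1)] using L[OF t] L'[OF t] by (simp add: power2_eq_square field_simps)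
  qed
  thus ?thesis by (auto simp: fun_eq_iff)
qed

lemma DIFF_EST:
  assumes N: "N \<ge> 2" and K\<rho>: "(real N - 1) * \<rho> \<le> 1/4" and fb: "wbd f F0"
    and zm: "zm \<in> Xsp N b" "wbd zm \<rho>" and zl: "zl \<in> Xsp N b" "wbd zl \<rho>"
    and Lm: "\<And>t. t \<ge> 0 \<Longrightarrow> Lop N zm t = (real N - 1) / 2 * (zm t)\<^sup>2 + m * f t"
    and Ll: "\<And>t. t \<ge> 0 \<Longrightarrow> Lop N zl t = (real N - 1) / 2 * (zl t)\<^sup>2 + l * f t"
  shows "wbd (\<lambda>t. zm t - zl t) (2 * \<bar>m - l\<bar> * F0)"
proof -
  define K where "K = real N - 1"
  have K0: "K \<ge> 0" using N by (simp add: K_def)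
  have r0: "\<rho> \<ge> 0" using wbd_nonneg[OF zm(2)] .
  note dX = Xdiff[OF zm(1) zl(1)]
  define D where "D = Ynorm (\<lambda>t. zm t - zl t)"
  have dD: "wbd (\<lambda>t. zm t - zl t) D" unfolding D_def by (rule X_wbd[OF dX(1)])
  have "wbd (\<lambda>t. (K/2) * ((zm t + zl t) * (zm t - zl t)) + (m - l) * f t)
      (\<bar>K/2\<bar> * ((\<rho> + \<rho>) * D) + \<bar>m - l\<bar> * F0)"
    by (rule wbd_add[OF wbd_cmult[OF wbd_prod[OF wbd_add[OF zm(2) zl(2)] dD]] wbd_cmult[OF fb]])
  hence "wbd (Lop N (\<lambda>t. zm t - zl t)) ((K * \<rho>) * D + \<bar>m - l\<bar> * F0)"
  proof (rule wbd_cong[OF wbd_mono])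
    show "\<bar>K/2\<bar> * ((\<rho> + \<rho>) * D) + \<bar>m - l\<bar> * F0 \<le> (K * \<rho>) * D + \<bar>m - l\<bar> * F0"
      using K0 by (simp add: algebra_simps)
    fix t :: real assume t: "t \<ge> 0"
    show "Lop N (\<lambda>t. zm t - zl t) t = K / 2 * ((zm t + zl t) * (zm t - zl t)) + (m - l) * f t"
      unfolding dX(2) using Lm[OF t] Ll[OF t] by (simp add: K_def power2_eq_square algebra_simps)
  qed
  from AP(1)[OF N dX(1) this] have "D \<le> (K * \<rho>) * D + \<bar>m - l\<bar> * F0" unfolding D_def by (rule YN_le)
  moreover have "(K * \<rho>) * D \<le> (1/4) * D" using K\<rho> wbd_nonneg[OF dD] by (intro mult_right_mono) (auto simp: K_def)
  moreover have "\<bar>m - l\<bar> * F0 \<ge> 0" using wbd_nonneg[OF fb] by simp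
  ultimately have "D \<le> 2 * \<bar>m - l\<bar> * F0" by linarith
  thus ?thesis by (rule wbd_mono[OF dD])
qed

lemma DERIV_EST:
  assumes N: "N \<ge> 2" and K\<rho>: "(real N - 1) * \<rho> \<le> 1/4" and fb: "wbd f F0"
    and zm: "zm \<in> Xsp N b" "wbd zm \<rho>" and zl: "zl \<in> Xsp N b" "wbd zl \<rho>"
    and Lm: "\<And>t. t \<ge> 0 \<Longrightarrow> Lop N zm t = (real N - 1) / 2 * (zm t)\<^sup>2 + m * f t"
    and Ll: "\<And>t. t \<ge> 0 \<Longrightarrow> Lop N zl t = (real N - 1) / 2 * (zl t)\<^sup>2 + l * f t"
    and wl: "wl \<in> Xsp N b" and Lw: "\<And>t. t \<ge> 0 \<Longrightarrow> Lop N wl t = (real N - 1) * zl t * wl t + f t"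
  shows "Xnorm (\<lambda>t. zm t - zl t - (m - l) * wl t)
     \<le> (9 + \<bar>real N - 4\<bar>) * (real N - 1) * (2 * \<bar>m - l\<bar> * F0)\<^sup>2"
proof -
  define K where "K = real N - 1"
  define D' where "D' = 2 * \<bar>m - l\<bar> * F0"
  have K0: "K \<ge> 0" using N by (simp add: K_def)
  have r0: "\<rho> \<ge> 0" using wbd_nonneg[OF zm(2)] .
  note dX = Xdiff[OF zm(1) zl(1)]
  have dD: "wbd (\<lambda>t. zm t - zl t) D'" unfolding D'_def by (rule DIFF_EST[OF N K\<rho> fb zm zl Lm Ll])
  note rX = Xcomb[OF dX(1) wl, of "m - l"]
  define E where "E = Ynorm (\<lambda>t. zm t - zl t - (m - l) * wl t)"
  have rE: "wbd (\<lambda>t. zm t - zl t - (m - l) * wl t) E" unfolding E_def by (rule X_wbd[OF rX(1)])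
  have "wbd (\<lambda>t. K * (zl t * (zm t - zl t - (m - l) * wl t)) + (K/2) * ((zm t - zl t) * (zm t - zl t)))
      (\<bar>K\<bar> * (\<rho> * E) + \<bar>K/2\<bar> * (D' * D'))"
    by (rule wbd_add[OF wbd_cmult[OF wbd_prod[OF zl(2) rE]] wbd_cmult[OF wbd_prod[OF dD dD]]])
  hence LB: "wbd (Lop N (\<lambda>t. zm t - zl t - (m - l) * wl t)) ((K * \<rho>) * E + K/2 * D'\<^sup>2)"
  proof (rule wbd_cong[OF wbd_mono])
    show "\<bar>K\<bar> * (\<rho> * E) + \<bar>K/2\<bar> * (D' * D') \<le> (K * \<rho>) * E + K/2 * D'\<^sup>2"
      using K0 by (simp add: power2_eq_square algebra_simps)
    fix t :: real assume t: "t \<ge> 0"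
    show "Lop N (\<lambda>t. zm t - zl t - (m - l) * wl t) t =
        K * (zl t * (zm t - zl t - (m - l) * wl t)) + (K/2) * ((zm t - zl t) * (zm t - zl t))"
      by (simp only: rX(2) dX(2) Lm[OF t] Ll[OF t] Lw[OF t]) (simp add: K_def power2_eq_square field_simps)
  qed
  have E0: "E \<ge> 0" using wbd_nonneg[OF rE] .
  have KE: "(K * \<rho>) * E \<le> (1/4) * E" using K\<rho> E0 by (intro mult_right_mono) (auto simp: K_def)
  from AP(1)[OF N rX(1) LB] have "E \<le> (K * \<rho>) * E + K/2 * D'\<^sup>2" unfolding E_def by (rule YN_le)
  moreover have "K/2 * D'\<^sup>2 = (1/2) * (K * D'\<^sup>2)" by simp
  moreover have "K * D'\<^sup>2 \<ge> 0" using K0 by simp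
  ultimately have E1: "E \<le> K * D'\<^sup>2" using KE by linarith
  have "Xnorm (\<lambda>t. zm t - zl t - (m - l) * wl t) \<le> (9 + \<bar>real N - 4\<bar>) * ((K * \<rho>) * E + K/2 * D'\<^sup>2)"
    by (rule APX[OF N rX(1) LB])
  also have "\<dots> \<le> (9 + \<bar>real N - 4\<bar>) * (K * D'\<^sup>2)"
  proof (rule mult_left_mono)
    have "(K * \<rho>) * E \<le> (1/4) * (K * D'\<^sup>2)" using KE E1 by linarith
    moreover have "K * D'\<^sup>2 \<ge> 0" using K0 by simp
    ultimately show "(K * \<rho>) * E + K/2 * D'\<^sup>2 \<le> K * D'\<^sup>2" by linarith
  qed simp
  finally show ?thesis by (simp add: K_def D'_def mult.assoc)
qed

lemma CONT_EST:
  assumes N: "N \<ge> 2" and K\<rho>: "(real N - 1) * \<rho> \<le> 1/4" and fb: "wbd f F0"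
    and zm: "zm \<in> Xsp N b" "wbd zm \<rho>" and zl: "zl \<in> Xsp N b" "wbd zl \<rho>"
    and Lm: "\<And>t. t \<ge> 0 \<Longrightarrow> Lop N zm t = (real N - 1) / 2 * (zm t)\<^sup>2 + m * f t"
    and Ll: "\<And>t. t \<ge> 0 \<Longrightarrow> Lop N zl t = (real N - 1) / 2 * (zl t)\<^sup>2 + l * f t"
    and wm: "wm \<in> Xsp N b" "wbd wm R1" and Lwm: "\<And>t. t \<ge> 0 \<Longrightarrow> Lop N wm t = (real N - 1) * zm t * wm t + f t"
    and wl: "wl \<in> Xsp N b" and Lwl: "\<And>t. t \<ge> 0 \<Longrightarrow> Lop N wl t = (real N - 1) * zl t * wl t + f t"
  shows "Xnorm (\<lambda>t. wm t - wl t) \<le> 2 * (9 + \<bar>real N - 4\<bar>) * (real N - 1) * (2 * \<bar>m - l\<bar> * F0) * R1"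
proof -
  define K where "K = real N - 1"
  define D' where "D' = 2 * \<bar>m - l\<bar> * F0"
  have K0: "K \<ge> 0" using N by (simp add: K_def)
  have dD: "wbd (\<lambda>t. zm t - zl t) D'" unfolding D'_def by (rule DIFF_EST[OF N K\<rho> fb zm zl Lm Ll])
  note wX = Xdiff[OF wm(1) wl]
  define E where "E = Ynorm (\<lambda>t. wm t - wl t)"
  have wE: "wbd (\<lambda>t. wm t - wl t) E" unfolding E_def by (rule X_wbd[OF wX(1)])
  have "wbd (\<lambda>t. K * (zl t * (wm t - wl t)) + K * ((zm t - zl t) * wm t)) (\<bar>K\<bar> * (\<rho> * E) + \<bar>K\<bar> * (D' * R1))"
    by (rule wbd_add[OF wbd_cmult[OF wbd_prod[OF zl(2) wE]] wbd_cmult[OF wbd_prod[OF dD wm(2)]]])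
  hence LB: "wbd (Lop N (\<lambda>t. wm t - wl t)) ((K * \<rho>) * E + K * D' * R1)"
  proof (rule wbd_cong[OF wbd_mono])
    show "\<bar>K\<bar> * (\<rho> * E) + \<bar>K\<bar> * (D' * R1) \<le> (K * \<rho>) * E + K * D' * R1"
      using K0 by (simp add: algebra_simps)
    fix t :: real assume t: "t \<ge> 0"
    show "Lop N (\<lambda>t. wm t - wl t) t = K * (zl t * (wm t - wl t)) + K * ((zm t - zl t) * wm t)"
      by (simp only: wX(2) Lwm[OF t] Lwl[OF t]) (simp add: K_def algebra_simps)
  qed
  have E0: "E \<ge> 0" using wbd_nonneg[OF wE] .
  have KE: "(K * \<rho>) * E \<le> (1/4) * E" using K\<rho> E0 by (intro mult_right_mono) (auto simp: K_def)
  from AP(1)[OF N wX(1) LB] have "E \<le> (K * \<rho>) * E + K * D' * R1" unfolding E_def by (rule YN_le)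
  hence E1: "E \<le> 2 * (K * D' * R1)" using KE E0 by linarith
  have "Xnorm (\<lambda>t. wm t - wl t) \<le> (9 + \<bar>real N - 4\<bar>) * ((K * \<rho>) * E + K * D' * R1)"
    by (rule APX[OF N wX(1) LB])
  also have "\<dots> \<le> (9 + \<bar>real N - 4\<bar>) * (2 * (K * D' * R1))"
  proof (rule mult_left_mono)
    have "(K * \<rho>) * E \<le> (1/4) * (2 * (K * D' * R1))" using KE E1 by linarith
    moreover have "K * D' * R1 \<ge> 0" using E1 E0 by linarith
    ultimately show "(K * \<rho>) * E + K * D' * R1 \<le> 2 * (K * D' * R1)" by linarith
  qed simp
  finally show ?thesis by (simp add: K_def D'_def algebra_simps)
qed

lemma FZ:
  assumes N: "N \<ge> 2" and z: "z \<in> Xsp N b" and zr: "wbd z \<rho>" and K\<rho>: "(real N - 1) * \<rho> \<le> 1/4"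
  shows "is_Fz N b g z lam (\<lambda>w t. if t < 0 then 0 else Lop N w t - (real N - 1) * z t * w t)
       \<and> bij_betw (\<lambda>w t. if t < 0 then 0 else Lop N w t - (real N - 1) * z t * w t) (Xsp N b) Ysp"
proof -
  define K where "K = real N - 1"
  define Lz where "Lz w = (\<lambda>t. if t < 0 then 0 else Lop N w t - K * z t * w t)" for w :: "real \<Rightarrow> real"
  have K1: "K \<ge> 1" using N by (simp add: K_def)
  have r0: "\<rho> \<ge> 0" using wbd_nonneg[OF zr] .
  have cz: "continuous_on {0..} z" by (rule Xsp_props(7)[OF z])
  have LzY: "Lz w \<in> Ysp" if w: "w \<in> Xsp N b" for w
  proof -
    have "Lz w = (\<lambda>t. if t < 0 then 0 else (- K) * z t * w t + Lop N w t)"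
      by (rule ext) (simp add: Lz_def)
    thus ?thesis using YQ[OF cz Xsp_props(7)[OF w] zr X_wbd[OF w] Lop_Y[OF w], of "- K"] by simp
  qed
  have lin: "Lz (\<lambda>t. a * v t + c * w t) = (\<lambda>t. a * Lz v t + c * Lz w t)"
    if v: "v \<in> Xsp N b" and w: "w \<in> Xsp N b" for v w a c
  proof
    fix t :: real
    show "Lz (\<lambda>t. a * v t + c * w t) t = a * Lz v t + c * Lz w t"
      unfolding Lz_def Lop_lin[OF v w] by (simp add: algebra_simps)
  qed
  define C where "C = 1 + \<bar>real N - 4\<bar> + \<bar>2 * real N - 4\<bar> + K * \<rho>"
  have bnd: "Ynorm (Lz w) \<le> C * Xnorm w" if w: "w \<in> Xsp N b" for w
  proof -
    note xg = XN_ge[OF w]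
    have "wbd (\<lambda>t. (-1) * d2 w t + (real N - 4) * d1 w t + (2 * real N - 4) * w t + (- K) * (z t * w t))
        (\<bar>-1\<bar> * Xnorm w + \<bar>real N - 4\<bar> * Xnorm w + \<bar>2 * real N - 4\<bar> * Xnorm w + \<bar>- K\<bar> * (\<rho> * Xnorm w))"
      by (intro wbd_add wbd_cmult wbd_prod xg zr)
    hence "wbd (Lz w) (C * Xnorm w)"
    proof (rule wbd_cong[OF wbd_mono])
      show "\<bar>-1\<bar> * Xnorm w + \<bar>real N - 4\<bar> * Xnorm w + \<bar>2 * real N - 4\<bar> * Xnorm w + \<bar>- K\<bar> * (\<rho> * Xnorm w)
          \<le> C * Xnorm w" using K1 by (simp add: C_def algebra_simps)
    qed (simp add: Lz_def Lop_def algebra_simps)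
    thus ?thesis by (rule YN_le)
  qed
  have rem: "\<exists>d>0. \<forall>w\<in>Xsp N b. Xnorm w < d \<longrightarrow>
      Ynorm (\<lambda>t. Fmap N g (\<lambda>s. z s + w s) lam t - Fmap N g z lam t - Lz w t) \<le> e * Xnorm w"
    if e: "e > 0" for e
  proof (intro exI[of _ "2 * e / K"] conjI ballI impI)
    show "0 < 2 * e / K" using e K1 by simp
    fix w assume w: "w \<in> Xsp N b" and wd: "Xnorm w < 2 * e / K"
    note xg = XN_ge[OF w]
    have "wbd (\<lambda>t. (- K / 2) * (w t * w t)) (\<bar>- K / 2\<bar> * (Xnorm w * Xnorm w))"
      by (intro wbd_cmult wbd_prod xg)
    hence "wbd (\<lambda>t. Fmap N g (\<lambda>s. z s + w s) lam t - Fmap N g z lam t - Lz w t) (\<bar>- K / 2\<bar> * (Xnorm w * Xnorm w))"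
    proof (rule wbd_cong)
      fix t :: real assume t: "t \<ge> 0"
      show "Fmap N g (\<lambda>s. z s + w s) lam t - Fmap N g z lam t - Lz w t = (- K / 2) * (w t * w t)"
        using t by (simp only: Fmap_eq[OF t] Xsum(2)[OF z w] Lz_def if_False not_less[symmetric])
          (simp add: K_def power2_eq_square field_simps)
    qed
    hence "Ynorm (\<lambda>t. Fmap N g (\<lambda>s. z s + w s) lam t - Fmap N g z lam t - Lz w t) \<le> \<bar>- K / 2\<bar> * (Xnorm w * Xnorm w)"
      by (rule YN_le)
    also have "\<bar>- K / 2\<bar> * (Xnorm w * Xnorm w) = (K / 2) * Xnorm w * Xnorm w" using K1 by simp
    also have "\<dots> \<le> e * Xnorm w"
    proof (rule mult_right_mono)
      show "K / 2 * Xnorm w \<le> e" using wd K1 by (simp add: field_simps)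
    qed (rule xg(4))
    finally show "Ynorm (\<lambda>t. Fmap N g (\<lambda>s. z s + w s) lam t - Fmap N g z lam t - Lz w t) \<le> e * Xnorm w" .
  qed
  have isf: "is_Fz N b g z lam Lz"
    unfolding is_Fz_def using LzY lin bnd rem by blast
  have inj: "inj_on Lz (Xsp N b)"
  proof (rule inj_onI)
    fix v w assume v: "v \<in> Xsp N b" and w: "w \<in> Xsp N b" and eq: "Lz v = Lz w"
    have "(\<lambda>t. v t - w t) = (\<lambda>t. 0)"
    proof (rule LIN_INJ[OF N zr _ Xdiff(1)[OF v w]])
      show "(real N - 1) * \<rho> < 1" using K\<rho> by simp
      fix t :: real assume t: "t \<ge> 0"
      have "Lz v t = Lz w t" using eq by simp
      thus "Lop N (\<lambda>t. v t - w t) t = (real N - 1) * z t * (v t - w t)"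
        using t unfolding Xdiff(2)[OF v w] by (simp add: Lz_def K_def algebra_simps)
    qed
    thus "v = w" by (auto simp: fun_eq_iff)
  qed
  have surj: "Lz ` Xsp N b = Ysp"
  proof
    show "Lz ` Xsp N b \<subseteq> Ysp" using LzY by auto
    show "Ysp \<subseteq> Lz ` Xsp N b"
    proof
      fix h assume h: "h \<in> Ysp"
      note hp = Ysp_props[OF h]
      obtain w where w: "w \<in> Xsp N b"
        and Lw: "Lop N w = (\<lambda>t. if t < 0 then 0 else (real N - 1) * z t * w t + h t)"
        using LIN_FP[OF N z zr K\<rho> h YN_ge[OF hp(2,3)]] by blast
      have "Lz w = h"
      proof
        fix t :: real
        show "Lz w t = h t" using Lw hp(1)[of t] by (cases "t < 0") (auto simp: Lz_def K_def)
      qed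
      thus "h \<in> Lz ` Xsp N b" using w by blast
    qed
  qed
  show ?thesis using isf inj surj unfolding Lz_def K_def bij_betw_def by simp
qed

theorem theorem4p5:
  fixes N :: nat and g :: "real \<Rightarrow> real" and b :: bc
  assumes "N \<ge> 2"
    and "set_integrable lborel {0..1} g"
    and "((\<lambda>t. exp ((real N - 3) * t) * (LBINT s=0..exp (- t). g s)) \<longlongrightarrow> 0) at_top"
  shows "\<exists>U I zf.
     U \<subseteq> Xsp N b \<and> (\<exists>r>0. {z \<in> Xsp N b. Xnorm z < r} \<subseteq> U) \<and>
     open I \<and> (0::real) \<in> I \<and>
     (\<forall>lam\<in>I. zf lam \<in> U \<and> Fmap N g (zf lam) lam = (\<lambda>t. 0) \<and>
        (\<forall>z\<in>U. Fmap N g z lam = (\<lambda>t. 0) \<longrightarrow> z = zf lam)) \<and>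
     C1_into_X N b I zf \<and>
     zf 0 = (\<lambda>t. 0) \<and>
     (\<forall>lam\<in>I. \<exists>L. is_Fz N b g (zf lam) lam L \<and> bij_betw L (Xsp N b) Ysp)"
proof -
  note N = assms(1)
  have fY: "fF N g \<in> Ysp" by (rule fF_Y[OF assms(2,3)])
  define F0 where "F0 = Ynorm (fF N g)"
  have fb: "wbd (fF N g) F0" unfolding F0_def by (rule YN_ge[OF Ysp_props(2,3)[OF fY]])
  have F00: "F0 \<ge> 0" using wbd_nonneg[OF fb] .
  define K where "K = real N - 1"
  have K1: "K \<ge> 1" using N by (simp add: K_def)
  define CX where "CX = 9 + \<bar>real N - 4\<bar>"
  have CX9: "CX \<ge> 9" by (simp add: CX_def)
  define r where "r = 1 / K"
  have r0: "r > 0" using K1 by (simp add: r_def)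
  have Kr: "K * r = 1" using K1 by (simp add: r_def)
  define \<rho> where "\<rho> = r / (8 * CX)"
  have \<rho>0: "\<rho> > 0" using r0 CX9 by (simp add: \<rho>_def)
  have K\<rho>e: "K * \<rho> = 1 / (8 * CX)" using Kr CX9 by (simp add: \<rho>_def field_simps)
  have K\<rho>: "(real N - 1) * \<rho> \<le> 1/4"
  proof -
    have "1 / (8 * CX) \<le> 1 / 4" using CX9 by (simp add: field_simps)
    thus ?thesis using K\<rho>e by (simp add: K_def)
  qed
  have CX\<rho>: "CX * \<rho> = r / 8" using CX9 by (simp add: \<rho>_def field_simps)
  define lz where "lz = \<rho> / (2 * F0 + 1)"
  have lz0: "lz > 0" using \<rho>0 F00 by (simp add: lz_def)
  define I where "I = ball (0::real) lz"
  have memI: "lam \<in> I \<longleftrightarrow> \<bar>lam\<bar> < lz" for lam by (simp add: I_def)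
  have lamF: "\<bar>lam\<bar> * F0 \<le> \<rho> / 2" if "lam \<in> I" for lam
  proof -
    have "\<bar>lam\<bar> * F0 \<le> lz * F0" using that F00 memI by (intro mult_right_mono) auto
    also have "\<dots> = \<rho> * F0 / (2 * F0 + 1)" by (simp add: lz_def)
    also have "\<dots> \<le> \<rho> / 2" using F00 \<rho>0 by (simp add: field_simps)
    finally show ?thesis .
  qed
  define P where "P lam z \<longleftrightarrow> z \<in> Xsp N b \<and> wbd z \<rho> \<and>
      Lop N z = (\<lambda>t. if t < 0 then 0 else (real N - 1) / 2 * (z t)\<^sup>2 + lam * fF N g t)" for lam z
  define zf where "zf lam = (SOME z. P lam z)" for lam
  have zfP: "P lam (zf lam)" if "lam \<in> I" for lam
  proof -
    have "\<exists>z. P lam z" using NL_FP[OF N fY fb \<rho>0 K\<rho> lamF[OF that], of b] by (auto simp: P_def)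
    thus ?thesis unfolding zf_def by (rule someI_ex)
  qed
  have zfX: "zf lam \<in> Xsp N b" and zfr: "wbd (zf lam) \<rho>"
    and Lzf: "\<And>t. t \<ge> 0 \<Longrightarrow> Lop N (zf lam) t = (real N - 1) / 2 * (zf lam t)\<^sup>2 + lam * fF N g t"
    if "lam \<in> I" for lam
    using zfP[OF that] unfolding P_def by auto
  define U where "U = {z \<in> Xsp N b. Xnorm z < r}"
  have zfU: "zf lam \<in> U" if lam: "lam \<in> I" for lam
  proof -
    have "wbd (\<lambda>t. K/2 * (zf lam t * zf lam t) + lam * fF N g t) (\<bar>K/2\<bar> * (\<rho> * \<rho>) + \<bar>lam\<bar> * F0)"
      by (rule wbd_add[OF wbd_cmult[OF wbd_prod[OF zfr[OF lam] zfr[OF lam]]] wbd_cmult[OF fb]])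
    hence "wbd (Lop N (zf lam)) (\<bar>K/2\<bar> * (\<rho> * \<rho>) + \<bar>lam\<bar> * F0)"
      by (rule wbd_cong) (simp add: Lzf[OF lam] K_def power2_eq_square)
    from APX[OF N zfX[OF lam] this]
    have X: "Xnorm (zf lam) \<le> CX * (\<bar>K/2\<bar> * (\<rho> * \<rho>) + \<bar>lam\<bar> * F0)" by (simp add: CX_def)
    have "CX * (\<bar>K/2\<bar> * (\<rho> * \<rho>)) = (K * \<rho>) * (CX * \<rho>) / 2" using K1 by simp
    also have "\<dots> = r / (128 * CX)" using CX9 by (simp only: K\<rho>e CX\<rho>) (simp add: field_simps)
    also have "\<dots> \<le> r / 128" using CX9 r0 by (simp add: field_simps)
    finally have a: "CX * (\<bar>K/2\<bar> * (\<rho> * \<rho>)) \<le> r / 128" .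
    have "CX * (\<bar>lam\<bar> * F0) \<le> CX * (\<rho> / 2)" using lamF[OF lam] CX9 by (intro mult_left_mono) auto
    also have "\<dots> = r / 16" using CX\<rho> by simp
    finally have "CX * (\<bar>lam\<bar> * F0) \<le> r / 16" .
    moreover have "Xnorm (zf lam) \<le> CX * (\<bar>K/2\<bar> * (\<rho> * \<rho>)) + CX * (\<bar>lam\<bar> * F0)"
      using X by (simp only: distrib_left)
    ultimately have "Xnorm (zf lam) < r" using a r0 by linarith
    thus ?thesis using zfX[OF lam] by (simp add: U_def)
  qed
  have Fz: "Fmap N g (zf lam) lam = (\<lambda>t. 0)" if lam: "lam \<in> I" for lam
  proof
    fix t :: real
    show "Fmap N g (zf lam) lam t = 0"
    proof (cases "t < 0")
      case True thus ?thesis by (rule Fmap_neg)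
    next
      case False
      hence t: "t \<ge> 0" by simp
      show ?thesis by (simp add: Fmap_eq[OF t] Lzf[OF lam t])
    qed
  qed
  have uniq: "z = zf lam" if lam: "lam \<in> I" and z: "z \<in> U" and F: "Fmap N g z lam = (\<lambda>t. 0)" for lam z
  proof -
    have zX: "z \<in> Xsp N b" and zr: "Xnorm z < r" using z by (auto simp: U_def)
    have zb: "wbd z r" by (rule wbd_mono[OF XN_ge(1)[OF zX]]) (use zr in simp)
    show ?thesis
    proof (rule UNIQ[OF N zX zb zfX[OF lam] zfr[OF lam]])
      show "(real N - 1) * ((r + \<rho>) / 2) < 1"
      proof -
        have "(real N - 1) * ((r + \<rho>) / 2) = (K * r + K * \<rho>) / 2" by (simp add: K_def algebra_simps)
        also have "\<dots> = (1 + 1 / (8 * CX)) / 2" using Kr K\<rho>e by simp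
        also have "\<dots> < 1" using CX9 by (simp add: field_simps)
        finally show ?thesis .
      qed
      fix t :: real assume t: "t \<ge> 0"
      have "Fmap N g z lam t = 0" using F by simp
      thus "Lop N z t = (real N - 1) / 2 * (z t)\<^sup>2 + lam * fF N g t" using Fmap_eq[OF t] by simp
      show "Lop N (zf lam) t = (real N - 1) / 2 * (zf lam t)\<^sup>2 + lam * fF N g t" by (rule Lzf[OF lam t])
    qed
  qed
  have I0: "(0::real) \<in> I" using lz0 by (simp add: memI)
  have zf0: "zf 0 = (\<lambda>t. 0)"
  proof -
    have zw: "wbd (\<lambda>t::real. 0::real) 0" by (simp add: wbd_def)
    have "Xnorm (\<lambda>t. 0) \<le> 0 + 0 + 0"
      by (rule XN_le[OF zw wbd_cong[OF zw] wbd_cong[OF zw]]) (auto simp: zero_X)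
    hence U0: "(\<lambda>t. 0) \<in> U" using r0 zero_X(1) by (simp add: U_def)
    have F0z: "Fmap N g (\<lambda>t. 0) 0 = (\<lambda>t. 0)"
    proof
      fix t :: real
      show "Fmap N g (\<lambda>t. 0) 0 t = 0"
        by (cases "t < 0") (auto simp: Fmap_neg Fmap_eq Lop_def zero_X(2,3) fF_def)
    qed
    show ?thesis using uniq[OF I0 U0 F0z] by simp
  qed
  define R1 where "R1 = 2 * F0 + 1"
  define Q where "Q lam w \<longleftrightarrow> w \<in> Xsp N b \<and> wbd w R1 \<and>
      Lop N w = (\<lambda>t. if t < 0 then 0 else (real N - 1) * zf lam t * w t + fF N g t)" for lam w
  define zf' where "zf' lam = (SOME w. Q lam w)" for lam
  have zf'Q: "Q lam (zf' lam)" if lam: "lam \<in> I" for lam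
  proof -
    have "\<exists>w. Q lam w"
      using LIN_FP[OF N zfX[OF lam] zfr[OF lam] K\<rho> fY fb] by (auto simp: Q_def R1_def)
    thus ?thesis unfolding zf'_def by (rule someI_ex)
  qed
  have zf'X: "zf' lam \<in> Xsp N b" and zf'r: "wbd (zf' lam) R1"
    and Lzf': "\<And>t. t \<ge> 0 \<Longrightarrow> Lop N (zf' lam) t = (real N - 1) * zf lam t * zf' lam t + fF N g t"
    if "lam \<in> I" for lam
    using zf'Q[OF that] unfolding Q_def by auto
  have C1: "C1_into_X N b I zf"
    unfolding C1_into_X_def
  proof (intro exI[of _ zf'] conjI ballI allI impI)
    fix l assume l: "l \<in> I"
    show "zf l \<in> Xsp N b" using zfX[OF l] by simp
  next
    fix l assume l: "l \<in> I"
    show "zf' l \<in> Xsp N b" using zf'X[OF l] by simp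
  next
    fix l e assume l: "l \<in> I" and e: "(e::real) > 0"
    define Cst where "Cst = CX * K * (4 * F0\<^sup>2)"
    have Cst0: "Cst \<ge> 0" using CX9 K1 by (simp add: Cst_def)
    show "\<exists>d>0. \<forall>m\<in>I. \<bar>m - l\<bar> < d \<longrightarrow>
        Xnorm (\<lambda>t. zf m t - zf l t - (m - l) * zf' l t) \<le> e * \<bar>m - l\<bar>"
    proof (intro exI[of _ "e / (Cst + 1)"] conjI ballI impI)
      show "0 < e / (Cst + 1)" using e Cst0 by simp
      fix m assume m: "m \<in> I" and md: "\<bar>m - l\<bar> < e / (Cst + 1)"
      have "Xnorm (\<lambda>t. zf m t - zf l t - (m - l) * zf' l t)
          \<le> (9 + \<bar>real N - 4\<bar>) * (real N - 1) * (2 * \<bar>m - l\<bar> * F0)\<^sup>2"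
        by (rule DERIV_EST[OF N K\<rho> fb zfX[OF m] zfr[OF m] zfX[OF l] zfr[OF l] Lzf[OF m] Lzf[OF l]
              zf'X[OF l] Lzf'[OF l]])
      also have "\<dots> = Cst * \<bar>m - l\<bar> * \<bar>m - l\<bar>"
      proof -
        have "(9 + \<bar>real N - 4\<bar>) * (real N - 1) * (2 * x * F0)\<^sup>2 = Cst * x * x" for x :: real
          by (simp add: Cst_def CX_def K_def power2_eq_square algebra_simps)
        thus ?thesis .
      qed
      also have "\<dots> \<le> Cst * (e / (Cst + 1)) * \<bar>m - l\<bar>"
        using md Cst0 by (intro mult_right_mono mult_left_mono) auto
      also have "\<dots> \<le> e * \<bar>m - l\<bar>"
      proof (rule mult_right_mono)
        show "Cst * (e / (Cst + 1)) \<le> e" using Cst0 e by (simp add: field_simps)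
      qed simp
      finally show "Xnorm (\<lambda>t. zf m t - zf l t - (m - l) * zf' l t) \<le> e * \<bar>m - l\<bar>" .
    qed
  next
    fix l e assume l: "l \<in> I" and e: "(e::real) > 0"
    define Cst where "Cst = 2 * CX * K * (2 * F0) * R1"
    have Cst0: "Cst \<ge> 0" using CX9 K1 F00 by (simp add: Cst_def R1_def)
    show "\<exists>d>0. \<forall>m\<in>I. \<bar>m - l\<bar> < d \<longrightarrow> Xnorm (\<lambda>t. zf' m t - zf' l t) < e"
    proof (intro exI[of _ "e / (Cst + 1)"] conjI ballI impI)
      show "0 < e / (Cst + 1)" using e Cst0 by simp
      fix m assume m: "m \<in> I" and md: "\<bar>m - l\<bar> < e / (Cst + 1)"
      have "Xnorm (\<lambda>t. zf' m t - zf' l t) \<le> 2 * (9 + \<bar>real N - 4\<bar>) * (real N - 1) * (2 * \<bar>m - l\<bar> * F0) * R1"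
        by (rule CONT_EST[OF N K\<rho> fb zfX[OF m] zfr[OF m] zfX[OF l] zfr[OF l] Lzf[OF m] Lzf[OF l]
              zf'X[OF m] zf'r[OF m] Lzf'[OF m] zf'X[OF l] Lzf'[OF l]])
      also have "\<dots> = Cst * \<bar>m - l\<bar>"
      proof -
        have "2 * (9 + \<bar>real N - 4\<bar>) * (real N - 1) * (2 * x * F0) * R1 = Cst * x" for x :: real
          by (simp add: Cst_def CX_def K_def algebra_simps)
        thus ?thesis .
      qed
      also have "\<dots> \<le> Cst * (e / (Cst + 1))" using md Cst0 by (intro mult_left_mono) auto
      also have "\<dots> < e" using Cst0 e by (simp add: field_simps)
      finally show "Xnorm (\<lambda>t. zf' m t - zf' l t) < e" .
    qed
  qed
  show ?thesis
  proof (intro exI[of _ U] exI[of _ I] exI[of _ zf] conjI)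
    show "U \<subseteq> Xsp N b" by (auto simp: U_def)
    show "\<exists>r>0. {z \<in> Xsp N b. Xnorm z < r} \<subseteq> U" using r0 by (auto simp: U_def)
    show "open I" by (simp add: I_def)
    show "(0::real) \<in> I" by (rule I0)
    show "\<forall>lam\<in>I. zf lam \<in> U \<and> Fmap N g (zf lam) lam = (\<lambda>t. 0) \<and>
        (\<forall>z\<in>U. Fmap N g z lam = (\<lambda>t. 0) \<longrightarrow> z = zf lam)"
      using zfU Fz uniq by blast
    show "C1_into_X N b I zf" by (rule C1)
    show "zf 0 = (\<lambda>t. 0)" by (rule zf0)
    show "\<forall>lam\<in>I. \<exists>L. is_Fz N b g (zf lam) lam L \<and> bij_betw L (Xsp N b) Ysp"
      using FZ[OF N zfX zfr K\<rho>] by blast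
  qed
qed

end
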